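(* A functional $F\colon\Sigma^{**}\to\mathcal B$ is $\Sigma^{**}$-restricted polynomial-time computable if and only if it has a total polynomial-time computable extension $\tilde F\colon\mathcal B\to\mathcal B$; i.e. $\mathrm P(\Sigma^{**})=\mathrm P|_{\Sigma^{**}}$.
   Context: $\Sigma=\{0,1\}$, $\mathcal B=(\Sigma^* )^{\Sigma^*}$ is the set of total string functions; $\Sigma^{**}$ is the set of length-monotone $\varphi\in\mathcal B$, i.e. $|\mathbf a|\le|\mathbf b|\Rightarrow|\varphi(\mathbf a)|\le|\varphi(\mathbf b)|$. An oracle Turing machine $M^?$ with oracle $\varphi$ replaces, upon entering its query state, the query-tape content $\mathbf b$ by $\varphi(\mathbf b)$ in one time step; $\operatorname{time}_{M^\varphi}(\mathbf a)$ is its number of steps on input $\mathbf a$. $M^?$ computes $F\colon A\to\mathcal B$ if $M^\varphi=F(\varphi)$ for all $\varphi\in A$. The size function is $|\varphi|(n)=\max\{|\varphi(\mathbf a)|:|\mathbf a|\le n\}$. Second-order polynomials are the smallest class of functions $\mathbb N^{\mathbb N}\times\mathbb N\to\mathbb N$ containing all $(l,n)\mapsto p(n)$ for polynomials $p$ with natural coefficients and closed under pointwise sum, pointwise product, and $P\mapsto P^+$, $P^+(l,n)=l(P(l,n))$. For $A\subseteq\mathcal B$, $F\colon A\to\mathcal B$ is $A$-restricted polynomial-time computable if some machine computing $F$ satisfies $\operatorname{time}_{M^\varphi}(\mathbf a)\le P(|\varphi|,|\mathbf a|)$ for all $\varphi\in A$, $\mathbf a\in\Sigma^*$, for some second-order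 polynomial $P$. A total functional is polynomial-time computable if this holds with $A=\mathcal B$. *)

theory Defs
  imports "HOL-Computational_Algebra.Polynomial"
begin

type_synonym word = "bool list"            \<comment> \<open>\<Sigma>* with \<Sigma> = {0,1}; False = 0, True = 1\<close>
type_synonym strfun = "word \<Rightarrow> word"

definition length_monotone :: "strfun set" where
  "length_monotone = {\<phi>. \<forall>a b. length a \<le> length b \<longrightarrow> length (\<phi> a) \<le> length (\<phi> b)}"

definition size_fn :: "strfun \<Rightarrow> nat \<Rightarrow> nat" where
  "size_fn \<phi> n = Max ((\<lambda>a. length (\<phi> a)) ` {a. length a \<le> n})"

inductive sop :: "((nat \<Rightarrow> nat) \<Rightarrow> nat \<Rightarrow> nat) \<Rightarrow> bool" where
  sop_poly: "sop (\<lambda>l n. poly (p :: nat poly) n)"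
| sop_add: "sop P \<Longrightarrow> sop Q \<Longrightarrow> sop (\<lambda>l n. P l n + Q l n)"
| sop_mult: "sop P \<Longrightarrow> sop Q \<Longrightarrow> sop (\<lambda>l n. P l n * Q l n)"
| sop_app: "sop P \<Longrightarrow> sop (\<lambda>l n. l (P l n))"

text \<open>Tape 0 is the input tape, tape 1 the query tape,
  tape 2 the output tape, further tapes are work tapes. Tape symbols are natural numbers below
  the alphabet size; 0 is the blank, 1 encodes the letter 0 and 2 encodes the letter 1.
  States are natural numbers below the number of states; state 0 is the start state,
  state 1 the halting state, state 2 the query state, state 3 the answer state.
  Tapes are one-sided infinite (cells indexed by nat); a left move at cell 0 stays.\<close>

datatype move = Lm | Sm | Rm

record otm =
  tapes :: nat
  states :: nat
  symbols :: nat
  delta :: "nat \<Rightarrow> nat list \<Rightarrow> nat \<times> (nat \<times> move) list"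

definition wf_otm :: "otm \<Rightarrow> bool" where
  "wf_otm M \<longleftrightarrow> tapes M \<ge> 3 \<and> states M \<ge> 4 \<and> symbols M \<ge> 3 \<and>
    (\<forall>q rs. q < states M \<and> length rs = tapes M \<and> set rs \<subseteq> {..<symbols M} \<longrightarrow>
       fst (delta M q rs) < states M \<and> length (snd (delta M q rs)) = tapes M \<and>
       (\<forall>x \<in> set (snd (delta M q rs)). fst x < symbols M))"

type_synonym tape = "(nat \<Rightarrow> nat) \<times> nat"    \<comment> \<open>content and head position\<close>
type_synonym config = "nat \<times> tape list"

definition sym_of_bool :: "bool \<Rightarrow> nat" where
  "sym_of_bool b = (if b then 2 else 1)"

definition enc :: "word \<Rightarrow> nat \<Rightarrow> nat" where
  "enc w = (\<lambda>i. if i < length w then sym_of_bool (w ! i) else 0)"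

definition dec :: "(nat \<Rightarrow> nat) \<Rightarrow> word" where
  "dec c = map (\<lambda>i. c i = 2) [0..< (LEAST i. c i \<notin> {1, 2})]"

fun mv :: "move \<Rightarrow> nat \<Rightarrow> nat" where
  "mv Lm h = h - 1"
| "mv Sm h = h"
| "mv Rm h = h + 1"

definition step :: "otm \<Rightarrow> strfun \<Rightarrow> config \<Rightarrow> config" where
  "step M \<phi> cf = (let (q, ts) = cf in
     if q = 1 then (q, ts)
     else if q = 2 then (3, ts[1 := (enc (\<phi> (dec (fst (ts ! 1)))), 0)])
     else (let (q', acts) = delta M q (map (\<lambda>t. fst t (snd t)) ts) in
       (q', map (\<lambda>(t, a). ((fst t)(snd t := fst a), mv (snd a) (snd t))) (zip ts acts))))"

definition init_config :: "otm \<Rightarrow> word \<Rightarrow> config" where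
  "init_config M a = (0, (enc a, 0) # replicate (tapes M - 1) (\<lambda>_. 0, 0))"

definition run :: "otm \<Rightarrow> strfun \<Rightarrow> word \<Rightarrow> nat \<Rightarrow> config" where
  "run M \<phi> a n = (step M \<phi> ^^ n) (init_config M a)"

definition halts :: "otm \<Rightarrow> strfun \<Rightarrow> word \<Rightarrow> bool" where
  "halts M \<phi> a \<longleftrightarrow> (\<exists>n. fst (run M \<phi> a n) = 1)"

definition otm_time :: "otm \<Rightarrow> strfun \<Rightarrow> word \<Rightarrow> nat" where
  "otm_time M \<phi> a = (LEAST n. fst (run M \<phi> a n) = 1)"

definition otm_output :: "otm \<Rightarrow> strfun \<Rightarrow> word \<Rightarrow> word" where
  "otm_output M \<phi> a = dec (fst (snd (run M \<phi> a (otm_time M \<phi> a)) ! 2))"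

definition computes_on :: "strfun set \<Rightarrow> otm \<Rightarrow> (strfun \<Rightarrow> strfun) \<Rightarrow> bool" where
  "computes_on A M F \<longleftrightarrow> (\<forall>\<phi>\<in>A. \<forall>a. halts M \<phi> a \<and> otm_output M \<phi> a = F \<phi> a)"

definition restricted_polytime :: "strfun set \<Rightarrow> (strfun \<Rightarrow> strfun) \<Rightarrow> bool" where
  "restricted_polytime A F \<longleftrightarrow> (\<exists>M P. wf_otm M \<and> sop P \<and> computes_on A M F \<and>
      (\<forall>\<phi>\<in>A. \<forall>a. otm_time M \<phi> a \<le> P (size_fn \<phi>) (length a)))"

definition polytime :: "(strfun \<Rightarrow> strfun) \<Rightarrow> bool" where
  "polytime F \<longleftrightarrow> restricted_polytime UNIV F"

end

theory Submission
  imports Defs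
begin


definition sym :: "tape \<Rightarrow> nat" where "sym t = fst t (snd t)"
definition apt :: "tape \<Rightarrow> nat \<times> move \<Rightarrow> tape" where
  "apt t a = ((fst t)(snd t := fst a), mv (snd a) (snd t))"
definition blank :: tape where "blank = (\<lambda>_. 0, 0)"
definition cm :: "nat \<Rightarrow> nat" where "cm = (\<lambda>j. if j = 0 then 1 else 0)"
definition ctr :: "nat \<Rightarrow> tape" where "ctr v = (cm, v)"

definition kk :: "nat \<Rightarrow> nat \<Rightarrow> nat \<Rightarrow> nat \<Rightarrow> nat \<Rightarrow> nat \<Rightarrow> nat \<Rightarrow> nat \<Rightarrow> (nat \<times> move) list" where
  "kk s0 s1 sx sa sb sc sr sd = [(s0,Sm),(s1,Sm),(sx,Sm),(sa,Sm),(sb,Sm),(sc,Sm),(sr,Sm),(sd,Sm)]"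

definition pdelta :: "nat \<Rightarrow> nat \<Rightarrow> nat \<Rightarrow> nat \<Rightarrow> nat \<Rightarrow> nat \<Rightarrow> nat \<Rightarrow> nat \<Rightarrow> nat \<Rightarrow> nat \<Rightarrow> nat \<times> (nat \<times> move) list" where
"pdelta d q s0 s1 sx sa sb sc sr sd = (
  if q = 0 then (20, [(s0,Sm),(s1,Sm),(1,Sm),(1,Sm),(1,Sm),(1,Sm),(1,Sm),(1,Sm)])
  else if 20 \<le> q \<and> q < 20 + d then (Suc q, [(s0,Sm),(s1,Sm),(sx,Sm),(sa,Sm),(sb,Sm),(sc,Sm),(sr,Sm),(sd,Rm)])
  else if q = 20 + d then (4, kk s0 s1 sx sa sb sc sr sd)
  else if q = 4 then (if s0 = 0 then (5, kk s0 s1 sx sa sb sc sr sd)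
       else (4, [(s0,Rm),(s1,Sm),(sx,Rm),(sa,Sm),(sb,Sm),(sc,Sm),(sr,Rm),(sd,Sm)]))
  else if q = 5 then (if sr = 1 then (6, kk s0 s1 sx sa sb sc sr sd)
       else (5, [(s0,Lm),(s1,Sm),(sx,Sm),(sa,Sm),(sb,Sm),(sc,Sm),(sr,Lm),(sd,Sm)]))
  else if q = 6 then (if sd = 1 then (18, kk s0 s1 sx sa sb sc sr sd)
       else (7, [(s0,Sm),(s1,Sm),(sx,Sm),(sa,Sm),(sb,Sm),(sc,Sm),(sr,Sm),(sd,Lm)]))
  else if q = 7 then (if sx = 1 then (2, [(s0,Sm),(0,Sm),(sx,Sm),(sa,Sm),(sb,Sm),(sc,Sm),(sr,Sm),(sd,Sm)])
       else (7, [(s0,Sm),(1,Rm),(sx,Lm),(sa,Rm),(sb,Sm),(sc,Sm),(sr,Sm),(sd,Sm)]))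
  else if q = 8 then (if sa = 1 then (9, kk s0 s1 sx sa sb sc sr sd)
       else (8, [(s0,Sm),(s1,Sm),(sx,Rm),(sa,Lm),(sb,Sm),(sc,Sm),(sr,Sm),(sd,Sm)]))
  else if q = 9 then (if s1 = 0 then (10, kk s0 s1 sx sa sb sc sr sd)
       else (9, [(s0,Sm),(s1,Rm),(sx,Rm),(sa,Sm),(sb,Sm),(sc,Sm),(sr,Rm),(sd,Sm)]))
  else if q = 10 then (if sr = 1 then (11, kk s0 s1 sx sa sb sc sr sd)
       else (10, [(s0,Sm),(s1,Lm),(sx,Sm),(sa,Sm),(sb,Sm),(sc,Sm),(sr,Lm),(sd,Sm)]))
  else if q = 11 then (12, [(s0,Sm),(s1,Sm),(sx,Rm),(sa,Sm),(sb,Sm),(sc,Sm),(sr,Sm),(sd,Sm)])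
  else if q = 12 then (13, [(s0,Sm),(s1,Sm),(sx,Rm),(sa,Sm),(sb,Sm),(sc,Sm),(sr,Sm),(sd,Sm)])
  else if q = 13 then (if sx = 1 then (14, kk s0 s1 sx sa sb sc sr sd)
       else (13, [(s0,Sm),(s1,Sm),(sx,Lm),(sa,Rm),(sb,Rm),(sc,Sm),(sr,Sm),(sd,Sm)]))
  else if q = 14 then (if sa = 1 then (17, kk s0 s1 sx sa sb sc sr sd)
       else (15, [(s0,Sm),(s1,Sm),(sx,Sm),(sa,Lm),(sb,Sm),(sc,Sm),(sr,Sm),(sd,Sm)]))
  else if q = 15 then (if sb = 1 then (16, kk s0 s1 sx sa sb sc sr sd)
       else (15, [(s0,Sm),(s1,Sm),(sx,Rm),(sa,Sm),(sb,Lm),(sc,Rm),(sr,Sm),(sd,Sm)]))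
  else if q = 16 then (if sc = 1 then (14, kk s0 s1 sx sa sb sc sr sd)
       else (16, [(s0,Sm),(s1,Sm),(sx,Sm),(sa,Sm),(sb,Rm),(sc,Lm),(sr,Sm),(sd,Sm)]))
  else if q = 17 then (if sb = 1 then (6, kk s0 s1 sx sa sb sc sr sd)
       else (17, [(s0,Sm),(s1,Sm),(sx,Sm),(sa,Sm),(sb,Lm),(sc,Sm),(sr,Sm),(sd,Sm)]))
  else if q = 18 then (if s1 = 0 then (19, kk s0 s1 sx sa sb sc sr sd)
       else (18, [(s0,Sm),(0,Rm),(sx,Sm),(sa,Sm),(sb,Sm),(sc,Sm),(sr,Rm),(sd,Sm)]))
  else if q = 19 then (if sr = 1 then (21 + d, [(s0,Sm),(s1,Sm),(sx,Sm),(sa,Sm),(sb,Sm),(sc,Sm),(sr,Sm),(2,Sm)])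
       else (19, [(s0,Sm),(s1,Lm),(sx,Sm),(sa,Sm),(sb,Sm),(sc,Sm),(sr,Lm),(sd,Sm)]))
  else (q, kk s0 s1 sx sa sb sc sr sd))"

definition sig :: "nat \<Rightarrow> nat \<Rightarrow> nat" where
  "sig d q = (if q = 1 \<or> q = 2 \<or> q = 3 then q else 21 + d + q)"

definition delta' :: "otm \<Rightarrow> nat \<Rightarrow> nat \<Rightarrow> nat list \<Rightarrow> nat \<times> (nat \<times> move) list" where
"delta' M d q rs = (let k = tapes M in
  if q = 1 \<or> q = 2 then (q, map (\<lambda>s. (s, Sm)) rs)
  else if (q = 3 \<and> rs ! (k+5) \<noteq> 2) \<or> (q \<noteq> 3 \<and> q < 21 + d) then
    (let qq = (if q = 3 then 8 else q);
         pr = pdelta d qq (rs!0) (rs!1) (rs!k) (rs!(k+1)) (rs!(k+2)) (rs!(k+3)) (rs!(k+4)) (rs!(k+5))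
     in (fst pr, [snd pr ! 0, snd pr ! 1] @ map (\<lambda>i. (rs!i, Sm)) [2..<k] @ drop 2 (snd pr)))
  else
    (let qm = (if q = 3 then 3 else q - (21+d)) in
     if rs ! k = 1 then (1, map (\<lambda>s. (s, Sm)) rs)
     else (let pr = delta M qm (take k rs) in
        (sig d (fst pr), snd pr @ [(rs!k, Lm)] @ map (\<lambda>s. (s, Sm)) (drop (k+1) rs)))))"

definition CM :: "otm \<Rightarrow> nat \<Rightarrow> otm" where
  "CM M d = \<lparr>tapes = tapes M + 6, states = 21 + d + states M, symbols = symbols M, delta = delta' M d\<rparr>"

definition cfg :: "nat \<Rightarrow> nat \<Rightarrow> tape \<Rightarrow> tape \<Rightarrow> tape \<Rightarrow> tape \<Rightarrow> tape \<Rightarrow> tape \<Rightarrow> tape \<Rightarrow> tape \<Rightarrow> config" where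
  "cfg k q inp qt x a b c r dd = (q, [inp, qt] @ replicate (k - 2) blank @ [x, a, b, c, r, dd])"

lemma step_gen: "q \<noteq> 1 \<Longrightarrow> q \<noteq> 2 \<Longrightarrow> step N \<phi> (q, ts) =
   (fst (delta N q (map sym ts)), map (\<lambda>(t,a). apt t a) (zip ts (snd (delta N q (map sym ts)))))"
  by (simp add: step_def sym_def[abs_def] apt_def split: prod.split)

lemma nth_k: "k \<ge> 2 \<Longrightarrow> ([u,v] @ replicate (k-2) z @ S) ! (k+i) = S ! i"
proof -
  assume "k \<ge> 2" then obtain m where m: "k = Suc (Suc m)" by (metis add_2_eq_Suc le_Suc_ex)
  show ?thesis unfolding m using nth_append_length_plus[of "replicate m z" S i] by simp
qed
lemma nth_k0: "k \<ge> 2 \<Longrightarrow> ([u,v] @ replicate (k-2) z @ S) ! k = S ! 0"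
  using nth_k[of k u v z S 0] by simp

lemma delta'_prep:
  assumes "q \<noteq> 1" "q \<noteq> 2" "(q = 3 \<and> rs!(tapes M+5) \<noteq> 2) \<or> (q \<noteq> 3 \<and> q < 21+d)"
  shows "delta' M d q rs = (let pr = pdelta d (if q = 3 then 8 else q) (rs!0) (rs!1) (rs!tapes M) (rs!(tapes M+1))
         (rs!(tapes M+2)) (rs!(tapes M+3)) (rs!(tapes M+4)) (rs!(tapes M+5))
     in (fst pr, [snd pr ! 0, snd pr ! 1] @ map (\<lambda>i. (rs!i, Sm)) [2..<tapes M] @ drop 2 (snd pr)))"
  using assms unfolding delta'_def Let_def by auto

lemma apt_blank: "apt blank (0, Sm) = blank" by (simp add: apt_def blank_def fun_eq_iff)

lemma prep_step:
  assumes k: "tapes M \<ge> 3" and q: "q \<noteq> 1" "q \<noteq> 2"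
    and br: "(q = 3 \<and> sym dd \<noteq> 2) \<or> (q \<noteq> 3 \<and> q < 21 + d)"
    and pd: "pdelta d (if q = 3 then 8 else q) (sym inp) (sym qt) (sym x) (sym a) (sym b) (sym c) (sym r) (sym dd)
             = (q', [a0,a1,ax,aa,ab,ac,ar,ad])"
  shows "step (CM M d) \<phi> (cfg (tapes M) q inp qt x a b c r dd) =
     cfg (tapes M) q' (apt inp a0) (apt qt a1) (apt x ax) (apt a aa) (apt b ab) (apt c ac) (apt r ar) (apt dd ad)"
proof -
  let ?k = "tapes M"
  have k2: "?k \<ge> 2" using k by simp
  have rs: "map sym ([inp, qt] @ replicate (?k - 2) blank @ [x, a, b, c, r, dd]) =
     [sym inp, sym qt] @ replicate (?k - 2) 0 @ [sym x, sym a, sym b, sym c, sym r, sym dd]"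
    by (simp add: blank_def sym_def)
  let ?rs = "[sym inp, sym qt] @ replicate (?k - 2) 0 @ [sym x, sym a, sym b, sym c, sym r, sym dd]"
  have n0: "?rs ! ?k = sym x" using nth_k0[OF k2, of "sym inp" "sym qt" 0 "[sym x, sym a, sym b, sym c, sym r, sym dd]"] by simp
  have n1: "?rs ! (?k + 1) = sym a" "?rs ! (?k + 2) = sym b" "?rs ! (?k + 3) = sym c"
     "?rs ! (?k + 4) = sym r" "?rs ! (?k + 5) = sym dd"
    by (subst nth_k[OF k2], simp)+
  have mid: "map (\<lambda>i. (?rs ! i, Sm)) [2..<?k] = replicate (?k - 2) (0, Sm)"
  proof (rule nth_equalityI)
    fix i assume "i < length (map (\<lambda>i. (?rs ! i, Sm)) [2..<?k])"
    then have "i < ?k - 2" by simp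
    then show "map (\<lambda>i. (?rs ! i, Sm)) [2..<?k] ! i = replicate (?k - 2) (0, Sm) ! i"
      by (simp add: nth_append)
  qed simp
  have n00: "?rs ! 0 = sym inp" "?rs ! 1 = sym qt" by simp_all
  have br': "(q = 3 \<and> ?rs ! (?k+5) \<noteq> 2) \<or> (q \<noteq> 3 \<and> q < 21 + d)" using br n1(5) by simp
  have "delta (CM M d) q ?rs = (let pr = pdelta d (if q = 3 then 8 else q) (?rs!0) (?rs!1) (?rs!?k) (?rs!(?k+1))
         (?rs!(?k+2)) (?rs!(?k+3)) (?rs!(?k+4)) (?rs!(?k+5))
     in (fst pr, [snd pr ! 0, snd pr ! 1] @ map (\<lambda>i. (?rs!i, Sm)) [2..<?k] @ drop 2 (snd pr)))"
    using delta'_prep[OF q br'] by (simp only: CM_def otm.select_convs)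
  also have "\<dots> = (q', [a0, a1] @ replicate (?k - 2) (0, Sm) @ [ax,aa,ab,ac,ar,ad])"
    unfolding n00 n0 n1 mid pd Let_def by simp
  finally have dl: "delta (CM M d) q ?rs = (q', [a0, a1] @ replicate (?k - 2) (0, Sm) @ [ax,aa,ab,ac,ar,ad])" .
  show ?thesis
    using q unfolding cfg_def step_gen[OF q] rs dl by (simp add: zip_replicate apt_blank)
qed

lemma query_step:
  assumes "tapes M \<ge> 3"
  shows "step N \<phi> (cfg (tapes M) 2 inp qt x a b c r dd) =
     cfg (tapes M) 3 inp (enc (\<phi> (dec (fst qt))), 0) x a b c r dd"
  by (simp add: step_def cfg_def)


lemma pdelta_len: "length (snd (pdelta d q s0 s1 sx sa sb sc sr sd)) = 8"
  by (simp add: pdelta_def kk_def)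

lemma prep_step2:
  assumes k: "tapes M \<ge> 3" and q: "q \<noteq> 1" "q \<noteq> 2"
    and br: "(q = 3 \<and> sym dd \<noteq> 2) \<or> (q \<noteq> 3 \<and> q < 21 + d)"
  shows "step (CM M d) \<phi> (cfg (tapes M) q inp qt x a b c r dd) =
    (let pr = pdelta d (if q = 3 then 8 else q) (sym inp) (sym qt) (sym x) (sym a) (sym b) (sym c) (sym r) (sym dd)
     in cfg (tapes M) (fst pr) (apt inp (snd pr ! 0)) (apt qt (snd pr ! 1)) (apt x (snd pr ! 2)) (apt a (snd pr ! 3))
       (apt b (snd pr ! 4)) (apt c (snd pr ! 5)) (apt r (snd pr ! 6)) (apt dd (snd pr ! 7)))"
proof -
  obtain q' L where pr: "pdelta d (if q = 3 then 8 else q) (sym inp) (sym qt) (sym x) (sym a) (sym b) (sym c) (sym r) (sym dd) = (q', L)"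
    by (cases "pdelta d (if q = 3 then 8 else q) (sym inp) (sym qt) (sym x) (sym a) (sym b) (sym c) (sym r) (sym dd)") auto
  have "length L = 8" using pdelta_len pr by (metis snd_conv)
  then obtain a0 a1 ax aa ab ac ar ad where L: "L = [a0,a1,ax,aa,ab,ac,ar,ad]"
    by (auto simp: numeral_eq_Suc length_Suc_conv)
  show ?thesis using prep_step[OF k q br, of inp qt x a b c r q' a0 a1 ax aa ab ac ar ad] pr L by simp
qed

lemma sym_pair[simp]: "sym (c, h) = c h" by (simp add: sym_def)
lemma apt_pair[simp]: "apt (c, h) (w, m) = (c(h := w), mv m h)" by (simp add: apt_def)
lemma sym_ctr[simp]: "sym (ctr v) = cm v" by (simp add: sym_def ctr_def)
lemma cm_ne2[simp]: "cm j \<noteq> 2" by (simp add: cm_def)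
lemma cm0[simp]: "cm 0 = 1" and cmS[simp]: "cm (Suc m) = 0" by (simp_all add: cm_def)
lemma apt_ctr[simp]: "w = cm v \<Longrightarrow> apt (ctr v) (w, m) = ctr (mv m v)" by (simp add: apt_def ctr_def)
lemma apt_keep[simp]: "apt t (sym t, Sm) = t" by (simp add: apt_def sym_def)
lemma fp: "(f ^^ Suc m) x = (f ^^ m) (f x)" by (simp add: funpow_swap1)
lemma enc_ne0: "i < length w \<Longrightarrow> enc w i \<noteq> 0" by (simp add: enc_def sym_of_bool_def)
lemma enc_0: "\<not> i < length w \<Longrightarrow> enc w i = 0" by (simp add: enc_def)

context fixes M :: otm and d :: nat and \<phi> :: strfun
  assumes k3: "tapes M \<ge> 3"
begin

abbreviation "st \<equiv> step (CM M d) \<phi>"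
abbreviation "C \<equiv> cfg (tapes M)"

lemmas ps = prep_step2[OF k3]

lemma L4: "length w = i + m \<Longrightarrow>
  (st ^^ Suc m) (C 4 (enc w, i) qt (ctr xv) a b c (ctr rv) dd) = C 5 (enc w, i+m) qt (ctr (xv+m)) a b c (ctr (rv+m)) dd"
proof (induction m arbitrary: i xv rv)
  case 0
  then show ?case by (simp add: ps pdelta_def kk_def enc_0 fun_upd_idem)
next
  case (Suc m)
  have "st (C 4 (enc w, i) qt (ctr xv) a b c (ctr rv) dd) = C 4 (enc w, Suc i) qt (ctr (Suc xv)) a b c (ctr (Suc rv)) dd"
    using Suc.prems by (simp add: ps pdelta_def kk_def enc_ne0)
  then show ?case using Suc.IH[of "Suc i" "Suc xv" "Suc rv"] Suc.prems by (simp only: fp) simp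
qed


lemma fpa: "(f ^^ (a + b)) x = (f ^^ a) ((f ^^ b) x)" by (simp add: funpow_add)

lemmas simps0 = ps pdelta_def kk_def fun_upd_idem

lemma L0: "st (C 0 inp qt blank blank blank blank blank blank) = C 20 inp qt (ctr 0) (ctr 0) (ctr 0) (ctr 0) (ctr 0) (ctr 0)"
proof -
  have e: "apt blank (Suc 0, Sm) = ctr 0" by (simp add: blank_def ctr_def apt_def cm_def fun_eq_iff)
  have s: "sym blank = 0" by (simp add: blank_def)
  show ?thesis by (simp add: simps0 e s)
qed

lemma L20: "d = j + m \<Longrightarrow> (st ^^ Suc m) (C (20+j) inp qt x a b c r (ctr j)) = C 4 inp qt x a b c r (ctr d)"
proof (induction m arbitrary: j)
  case 0 then show ?case by (simp add: simps0)
next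
  case (Suc m)
  have "st (C (20+j) inp qt x a b c r (ctr j)) = C (20 + Suc j) inp qt x a b c r (ctr (Suc j))"
    using Suc.prems by (simp add: simps0)
  then show ?case using Suc.IH[of "Suc j"] Suc.prems by (simp only: fp) simp
qed

lemma L5: "(st ^^ Suc m) (C 5 (cz, i+m) qt x a b c (ctr m) dd) = C 6 (cz, i) qt x a b c (ctr 0) dd"
proof (induction m)
  case 0 then show ?case by (simp add: simps0)
next
  case (Suc m)
  have "st (C 5 (cz, i + Suc m) qt x a b c (ctr (Suc m)) dd) = C 5 (cz, i+m) qt x a b c (ctr m) dd"
    by (simp add: simps0)
  then show ?case using Suc.IH by (simp only: fp)
qed

lemma L6a: "st (C 6 inp qt x a b c r (ctr 0)) = C 18 inp qt x a b c r (ctr 0)"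
  by (simp add: simps0)
lemma L6b: "st (C 6 inp qt x a b c r (ctr (Suc j))) = C 7 inp qt x a b c r (ctr j)"
  by (simp add: simps0)

definition wr :: "(nat \<Rightarrow> nat) \<Rightarrow> nat \<Rightarrow> nat \<Rightarrow> nat" where
  "wr cz i = (\<lambda>j. if j < i then 1 else cz j)"
lemma wr_step: "(wr cz i)(i := Suc 0) = wr cz (Suc i)" by (auto simp: wr_def fun_eq_iff)
lemma wr0: "wr cz 0 = cz" by (simp add: wr_def)

lemma L7: "(st ^^ Suc m) (C 7 inp (wr cz i, i) (ctr m) (ctr av) b c r dd) =
   C 2 inp ((wr cz (i+m))(i+m := 0), i+m) (ctr 0) (ctr (av+m)) b c r dd"
proof (induction m arbitrary: i av)
  case 0 then show ?case by (simp add: simps0 fun_upd_def)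
next
  case (Suc m)
  have "st (C 7 inp (wr cz i, i) (ctr (Suc m)) (ctr av) b c r dd) = C 7 inp (wr cz (Suc i), Suc i) (ctr m) (ctr (Suc av)) b c r dd"
    by (simp add: simps0 wr_step)
  then show ?case using Suc.IH[of "Suc i" "Suc av"] by (simp only: fp) simp
qed

lemma LQ: "st (C 2 inp qt x a b c r dd) = C 3 inp (enc (\<phi> (dec (fst qt))), 0) x a b c r dd"
  using query_step[OF k3] .

lemma dec_wr: "dec ((wr cz x)(x := 0)) = replicate x False"
proof -
  have "(LEAST i. ((wr cz x)(x := 0)) i \<notin> {1, 2}) = x"
    by (rule Least_equality) (auto simp: wr_def split: if_splits)
  then show ?thesis unfolding dec_def by (intro nth_equalityI) (auto simp: wr_def)
qed

lemma L8: "q = 3 \<or> q = 8 \<Longrightarrow> (st ^^ Suc m) (C q inp qt (ctr xv) (ctr m) b c r (ctr j)) = C 9 inp qt (ctr (xv+m)) (ctr 0) b c r (ctr j)"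
proof (induction m arbitrary: q xv)
  case 0 then show ?case by (auto simp add: simps0)
next
  case (Suc m)
  have "st (C q inp qt (ctr xv) (ctr (Suc m)) b c r (ctr j)) = C 8 inp qt (ctr (Suc xv)) (ctr m) b c r (ctr j)"
    using Suc.prems by (auto simp add: simps0)
  then show ?case using Suc.IH[of 8 "Suc xv"] by (simp only: fp) simp
qed

lemma L9: "length w = i + m \<Longrightarrow>
  (st ^^ Suc m) (C 9 inp (enc w, i) (ctr xv) a b c (ctr rv) dd) = C 10 inp (enc w, i+m) (ctr (xv+m)) a b c (ctr (rv+m)) dd"
proof (induction m arbitrary: i xv rv)
  case 0 then show ?case by (simp add: simps0 enc_0)
next
  case (Suc m)
  have "st (C 9 inp (enc w, i) (ctr xv) a b c (ctr rv) dd) = C 9 inp (enc w, Suc i) (ctr (Suc xv)) a b c (ctr (Suc rv)) dd"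
    using Suc.prems by (simp add: simps0 enc_ne0)
  then show ?case using Suc.IH[of "Suc i" "Suc xv" "Suc rv"] Suc.prems by (simp only: fp) simp
qed

lemma L10: "(st ^^ Suc m) (C 10 inp (cz, i+m) x a b c (ctr m) dd) = C 11 inp (cz, i) x a b c (ctr 0) dd"
proof (induction m)
  case 0 then show ?case by (simp add: simps0)
next
  case (Suc m)
  have "st (C 10 inp (cz, i + Suc m) x a b c (ctr (Suc m)) dd) = C 10 inp (cz, i+m) x a b c (ctr m) dd"
    by (simp add: simps0)
  then show ?case using Suc.IH by (simp only: fp)
qed

lemma L11: "(st ^^ 2) (C 11 inp qt (ctr xv) a b c r dd) = C 13 inp qt (ctr (xv+2)) a b c r dd"
  by (simp add: simps0 numeral_2_eq_2)

lemma L13: "(st ^^ Suc m) (C 13 inp qt (ctr m) (ctr av) (ctr bv) c r dd) = C 14 inp qt (ctr 0) (ctr (av+m)) (ctr (bv+m)) c r dd"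
proof (induction m arbitrary: av bv)
  case 0 then show ?case by (simp add: simps0)
next
  case (Suc m)
  have "st (C 13 inp qt (ctr (Suc m)) (ctr av) (ctr bv) c r dd) = C 13 inp qt (ctr m) (ctr (Suc av)) (ctr (Suc bv)) c r dd"
    by (simp add: simps0)
  then show ?case using Suc.IH[of "Suc av" "Suc bv"] by (simp only: fp) simp
qed

lemma L15: "(st ^^ Suc m) (C 15 inp qt (ctr xv) a (ctr m) (ctr cv) r dd) = C 16 inp qt (ctr (xv+m)) a (ctr 0) (ctr (cv+m)) r dd"
proof (induction m arbitrary: xv cv)
  case 0 then show ?case by (simp add: simps0)
next
  case (Suc m)
  have "st (C 15 inp qt (ctr xv) a (ctr (Suc m)) (ctr cv) r dd) = C 15 inp qt (ctr (Suc xv)) a (ctr m) (ctr (Suc cv)) r dd"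
    by (simp add: simps0)
  then show ?case using Suc.IH[of "Suc xv" "Suc cv"] by (simp only: fp) simp
qed

lemma L16: "(st ^^ Suc m) (C 16 inp qt x a (ctr bv) (ctr m) r dd) = C 14 inp qt x a (ctr (bv+m)) (ctr 0) r dd"
proof (induction m arbitrary: bv)
  case 0 then show ?case by (simp add: simps0)
next
  case (Suc m)
  have "st (C 16 inp qt x a (ctr bv) (ctr (Suc m)) r dd) = C 16 inp qt x a (ctr (Suc bv)) (ctr m) r dd"
    by (simp add: simps0)
  then show ?case using Suc.IH[of "Suc bv"] by (simp only: fp) simp
qed

lemma L14: "(st ^^ (m*(2*y+3)+1)) (C 14 inp qt (ctr xv) (ctr m) (ctr y) (ctr 0) r dd) =
   C 17 inp qt (ctr (xv+m*y)) (ctr 0) (ctr y) (ctr 0) r dd"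
proof (induction m arbitrary: xv)
  case 0 then show ?case by (simp add: simps0)
next
  case (Suc m)
  have s1: "st (C 14 inp qt (ctr xv) (ctr (Suc m)) (ctr y) (ctr 0) r dd) = C 15 inp qt (ctr xv) (ctr m) (ctr y) (ctr 0) r dd"
    by (simp add: simps0)
  have e: "Suc m*(2*y+3)+1 = (m*(2*y+3)+1) + (Suc y + (Suc y + 1))" by (simp add: algebra_simps)
  have h1: "(st ^^ 1) (C 14 inp qt (ctr xv) (ctr (Suc m)) (ctr y) (ctr 0) r dd) = C 15 inp qt (ctr xv) (ctr m) (ctr y) (ctr 0) r dd"
    using s1 by simp
  have h2: "(st ^^ Suc y) (C 15 inp qt (ctr xv) (ctr m) (ctr y) (ctr 0) r dd) = C 16 inp qt (ctr (xv+y)) (ctr m) (ctr 0) (ctr y) r dd"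
    using L15[where xv=xv and a="ctr m" and m=y and cv=0] by simp
  have h3: "(st ^^ Suc y) (C 16 inp qt (ctr (xv+y)) (ctr m) (ctr 0) (ctr y) r dd) = C 14 inp qt (ctr (xv+y)) (ctr m) (ctr y) (ctr 0) r dd"
    using L16[where x="ctr (xv+y)" and a="ctr m" and bv=0 and m=y] by simp
  show ?case
    unfolding e fpa[where f=st and a="m*(2*y+3)+1" and b="Suc y + (Suc y + 1)"] fpa[where f=st and a="Suc y" and b="Suc y + 1"] fpa[where f=st and a="Suc y" and b=1]
      h1 h2 h3 Suc.IH by (simp add: algebra_simps)
qed

lemma L17: "(st ^^ Suc m) (C 17 inp qt x a (ctr m) c r dd) = C 6 inp qt x a (ctr 0) c r dd"
proof (induction m)
  case 0 then show ?case by (simp add: simps0)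
next
  case (Suc m)
  have "st (C 17 inp qt x a (ctr (Suc m)) c r dd) = C 17 inp qt x a (ctr m) c r dd"
    by (simp add: simps0)
  then show ?case using Suc.IH by (simp only: fp)
qed

definition zr :: "word \<Rightarrow> nat \<Rightarrow> nat \<Rightarrow> nat" where
  "zr w i = (\<lambda>j. if j < i then 0 else enc w j)"
lemma zr_step: "(zr w i)(i := 0) = zr w (Suc i)" by (auto simp: zr_def fun_eq_iff)
lemma zr0: "zr w 0 = enc w" by (simp add: zr_def)
lemma zr_full: "zr w (length w) = (\<lambda>_. 0)" by (auto simp: zr_def fun_eq_iff enc_def)
lemma zr_at: "zr w i i = enc w i" by (simp add: zr_def)

lemma L18: "length w = i + m \<Longrightarrow>
  (st ^^ Suc m) (C 18 inp (zr w i, i) x a b c (ctr rv) dd) = C 19 inp (zr w (i+m), i+m) x a b c (ctr (rv+m)) dd"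
proof (induction m arbitrary: i rv)
  case 0 then show ?case by (simp add: simps0 enc_0 zr_at)
next
  case (Suc m)
  have "st (C 18 inp (zr w i, i) x a b c (ctr rv) dd) = C 18 inp (zr w (Suc i), Suc i) x a b c (ctr (Suc rv)) dd"
    using Suc.prems by (simp add: simps0 enc_ne0 zr_at zr_step)
  then show ?case using Suc.IH[of "Suc i" "Suc rv"] Suc.prems by (simp only: fp) simp
qed

definition dfl :: tape where "dfl = (cm(0 := 2), 0)"

lemma L19: "(st ^^ Suc m) (C 19 inp (cz, i+m) x a b c (ctr m) (ctr 0)) = C (21 + d) inp (cz, i) x a b c (ctr 0) dfl"
proof (induction m)
  case 0
  have e: "apt (ctr 0) (2, Sm) = dfl" by (simp add: apt_def ctr_def dfl_def)
  show ?case by (simp add: simps0 e)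
next
  case (Suc m)
  have "st (C 19 inp (cz, i + Suc m) x a b c (ctr (Suc m)) (ctr 0)) = C 19 inp (cz, i+m) x a b c (ctr m) (ctr 0)"
    by (simp add: simps0)
  then show ?case using Suc.IH by (simp only: fp)
qed

end


definition lf :: "strfun \<Rightarrow> nat \<Rightarrow> nat" where "lf \<phi> m = length (\<phi> (replicate m False))"
definition itf :: "(nat \<Rightarrow> nat) \<Rightarrow> nat \<Rightarrow> nat" where "itf l v = (v + l v + 2) * (v + l v + 2)"
definition Xs :: "nat \<Rightarrow> (nat \<Rightarrow> nat) \<Rightarrow> nat \<Rightarrow> nat" where "Xs d l n = (itf l ^^ d) n"

lemma itf_ge: "v \<le> itf l v" "l v \<le> itf l v"
proof -
  have "v + l v + 2 \<le> (v + l v + 2) * (v + l v + 2)" by simp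
  then show "v \<le> itf l v" "l v \<le> itf l v" unfolding itf_def by linarith+
qed

lemma itf_pow_ge: "z \<le> (itf l ^^ j) z"
proof (induction j)
  case (Suc j) then show ?case using itf_ge(1)[of "(itf l ^^ j) z" l] by simp
qed simp

lemma ch: "(f ^^ t1) a = b \<Longrightarrow> (f ^^ t2) b = c \<Longrightarrow> (f ^^ (t1 + t2)) a = c"
  by (metis funpow_add comp_apply add.commute)

definition tit :: "nat \<Rightarrow> nat \<Rightarrow> nat" where
  "tit v lu = (let y = v + lu + 2 in 1 + Suc v + 1 + Suc v + Suc lu + Suc lu + 2 + Suc y + (y*(2*y+3)+1) + Suc y)"

lemma tit_le: "tit v lu \<le> 10 * ((v + lu + 2) * (v + lu + 2))"
proof -
  define y where "y = v + lu + 2"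
  have "y \<ge> 2" by (simp add: y_def)
  have "tit v lu = 2*y*y + 2*v + 2*lu + 5*y + 11" by (simp add: tit_def y_def Let_def algebra_simps)
  also have "\<dots> \<le> 2*y*y + 7*y + 11" by (simp add: y_def)
  also have "\<dots> \<le> 10 * (y*y)"
  proof -
    have "2*y \<le> y*y" using mult_le_mono1[OF \<open>y \<ge> 2\<close>, of y] by simp
    then have "7*y \<le> 4*(y*y)" by linarith
    moreover have "11 \<le> 4*(y*y)" using \<open>y \<ge> 2\<close> mult_le_mono[OF \<open>y \<ge> 2\<close> \<open>y \<ge> 2\<close>] by linarith
    ultimately show ?thesis by linarith
  qed
  finally show ?thesis by (simp add: y_def)
qed

context fixes M :: otm and d :: nat and \<phi> :: strfun
  assumes k3: "tapes M \<ge> 3"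
begin

abbreviation "sT \<equiv> step (CM M d) \<phi>"
abbreviation "CC \<equiv> cfg (tapes M)"

lemma IT: "(sT ^^ tit v (length (\<phi> (replicate v False))))
   (CC 6 inp (enc w, 0) (ctr v) (ctr 0) (ctr 0) (ctr 0) (ctr 0) (ctr (Suc j))) =
   CC 6 inp (enc (\<phi> (replicate v False)), 0) (ctr (itf (lf \<phi>) v)) (ctr 0) (ctr 0) (ctr 0) (ctr 0) (ctr j)"
proof -
  define u where "u = \<phi> (replicate v False)"
  define y where "y = v + length u + 2"
  have lu: "lf \<phi> v = length u" by (simp add: lf_def u_def)
  have s1: "(sT ^^ 1) (CC 6 inp (enc w, 0) (ctr v) (ctr 0) (ctr 0) (ctr 0) (ctr 0) (ctr (Suc j))) =
     CC 7 inp (enc w, 0) (ctr v) (ctr 0) (ctr 0) (ctr 0) (ctr 0) (ctr j)"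
    using L6b[OF k3, where d=d and \<phi>=\<phi>] by simp
  have s2: "(sT ^^ Suc v) (CC 7 inp (enc w, 0) (ctr v) (ctr 0) (ctr 0) (ctr 0) (ctr 0) (ctr j)) =
     CC 2 inp ((wr (enc w) v)(v := 0), v) (ctr 0) (ctr v) (ctr 0) (ctr 0) (ctr 0) (ctr j)"
    using L7[OF k3, where d=d and \<phi>=\<phi> and cz="enc w" and i=0 and m=v and av=0] by (simp add: wr0[OF k3])
  have s3: "(sT ^^ 1) (CC 2 inp ((wr (enc w) v)(v := 0), v) (ctr 0) (ctr v) (ctr 0) (ctr 0) (ctr 0) (ctr j)) =
     CC 3 inp (enc u, 0) (ctr 0) (ctr v) (ctr 0) (ctr 0) (ctr 0) (ctr j)"
    using LQ[OF k3, where d=d and \<phi>=\<phi>] by (simp add: dec_wr[OF k3] u_def)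
  have s4: "(sT ^^ Suc v) (CC 3 inp (enc u, 0) (ctr 0) (ctr v) (ctr 0) (ctr 0) (ctr 0) (ctr j)) =
     CC 9 inp (enc u, 0) (ctr v) (ctr 0) (ctr 0) (ctr 0) (ctr 0) (ctr j)"
    using L8[OF k3, where d=d and \<phi>=\<phi> and q=3 and xv=0 and m=v] by simp
  have s5: "(sT ^^ Suc (length u)) (CC 9 inp (enc u, 0) (ctr v) (ctr 0) (ctr 0) (ctr 0) (ctr 0) (ctr j)) =
     CC 10 inp (enc u, length u) (ctr (v + length u)) (ctr 0) (ctr 0) (ctr 0) (ctr (length u)) (ctr j)"
    using L9[OF k3, where d=d and \<phi>=\<phi> and w=u and i=0 and m="length u" and xv=v and rv=0] by simp
  have s6: "(sT ^^ Suc (length u)) (CC 10 inp (enc u, length u) (ctr (v + length u)) (ctr 0) (ctr 0) (ctr 0) (ctr (length u)) (ctr j)) =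
     CC 11 inp (enc u, 0) (ctr (v + length u)) (ctr 0) (ctr 0) (ctr 0) (ctr 0) (ctr j)"
    using L10[OF k3, where d=d and \<phi>=\<phi> and cz="enc u" and i=0 and m="length u"] by simp
  have s7: "(sT ^^ 2) (CC 11 inp (enc u, 0) (ctr (v + length u)) (ctr 0) (ctr 0) (ctr 0) (ctr 0) (ctr j)) =
     CC 13 inp (enc u, 0) (ctr y) (ctr 0) (ctr 0) (ctr 0) (ctr 0) (ctr j)"
    using L11[OF k3, where d=d and \<phi>=\<phi>] by (simp add: y_def)
  have s8: "(sT ^^ Suc y) (CC 13 inp (enc u, 0) (ctr y) (ctr 0) (ctr 0) (ctr 0) (ctr 0) (ctr j)) =
     CC 14 inp (enc u, 0) (ctr 0) (ctr y) (ctr y) (ctr 0) (ctr 0) (ctr j)"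
    using L13[OF k3, where d=d and \<phi>=\<phi> and m=y and av=0 and bv=0] by simp
  have s9: "(sT ^^ (y*(2*y+3)+1)) (CC 14 inp (enc u, 0) (ctr 0) (ctr y) (ctr y) (ctr 0) (ctr 0) (ctr j)) =
     CC 17 inp (enc u, 0) (ctr (y*y)) (ctr 0) (ctr y) (ctr 0) (ctr 0) (ctr j)"
    using L14[OF k3, where d=d and \<phi>=\<phi> and m=y and y=y and xv=0] by simp
  have s10: "(sT ^^ Suc y) (CC 17 inp (enc u, 0) (ctr (y*y)) (ctr 0) (ctr y) (ctr 0) (ctr 0) (ctr j)) =
     CC 6 inp (enc u, 0) (ctr (y*y)) (ctr 0) (ctr 0) (ctr 0) (ctr 0) (ctr j)"
    using L17[OF k3, where d=d and \<phi>=\<phi> and m=y] by simp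
  have "tit v (length u) = 1 + Suc v + 1 + Suc v + Suc (length u) + Suc (length u) + 2 + Suc y + (y*(2*y+3)+1) + Suc y"
    by (simp add: tit_def y_def Let_def)
  moreover have "itf (lf \<phi>) v = y * y" by (simp add: itf_def lu y_def)
  ultimately show ?thesis
    using ch[OF ch[OF ch[OF ch[OF ch[OF ch[OF ch[OF ch[OF ch[OF s1 s2] s3] s4] s5] s6] s7] s8] s9] s10]
    by (simp add: u_def)
qed


lemma MLoop: "\<exists>t w'. (sT ^^ t) (CC 6 inp (enc w, 0) (ctr v) (ctr 0) (ctr 0) (ctr 0) (ctr 0) (ctr j)) =
     CC 6 inp (enc w', 0) (ctr ((itf (lf \<phi>) ^^ j) v)) (ctr 0) (ctr 0) (ctr 0) (ctr 0) (ctr 0)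
   \<and> t \<le> 10 * j * (itf (lf \<phi>) ^^ j) v \<and> length w' \<le> max (length w) ((itf (lf \<phi>) ^^ j) v)"
proof (induction j arbitrary: v w)
  case 0 then show ?case by (rule exI[of _ 0]) auto
next
  case (Suc j)
  define u where "u = \<phi> (replicate v False)"
  define X where "X = (itf (lf \<phi>) ^^ Suc j) v"
  obtain t w' where t: "(sT ^^ t) (CC 6 inp (enc u, 0) (ctr (itf (lf \<phi>) v)) (ctr 0) (ctr 0) (ctr 0) (ctr 0) (ctr j)) =
     CC 6 inp (enc w', 0) (ctr ((itf (lf \<phi>) ^^ j) (itf (lf \<phi>) v))) (ctr 0) (ctr 0) (ctr 0) (ctr 0) (ctr 0)"
    and tb: "t \<le> 10 * j * (itf (lf \<phi>) ^^ j) (itf (lf \<phi>) v)"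
    and wb: "length w' \<le> max (length u) ((itf (lf \<phi>) ^^ j) (itf (lf \<phi>) v))"
    using Suc.IH[of u "itf (lf \<phi>) v"] by blast
  have Xe: "(itf (lf \<phi>) ^^ j) (itf (lf \<phi>) v) = X" by (simp add: X_def funpow_swap1)
  have i1: "itf (lf \<phi>) v \<le> X" using itf_pow_ge[where z="itf (lf \<phi>) v" and l="lf \<phi>" and j=j] Xe by simp
  have lu: "length u \<le> X" using itf_ge(2)[where v=v and l="lf \<phi>"] i1 by (simp add: lf_def u_def)
  have tt: "tit v (length u) \<le> 10 * X"
    using tit_le[of v "length u"] i1 by (simp add: itf_def lf_def u_def)
  have it: "(sT ^^ tit v (length u)) (CC 6 inp (enc w, 0) (ctr v) (ctr 0) (ctr 0) (ctr 0) (ctr 0) (ctr (Suc j))) =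
     CC 6 inp (enc u, 0) (ctr (itf (lf \<phi>) v)) (ctr 0) (ctr 0) (ctr 0) (ctr 0) (ctr j)"
    unfolding u_def by (rule IT)
  show ?case
  proof (intro exI conjI)
    show "(sT ^^ (tit v (length u) + t)) (CC 6 inp (enc w, 0) (ctr v) (ctr 0) (ctr 0) (ctr 0) (ctr 0) (ctr (Suc j))) =
      CC 6 inp (enc w', 0) (ctr ((itf (lf \<phi>) ^^ Suc j) v)) (ctr 0) (ctr 0) (ctr 0) (ctr 0) (ctr 0)"
      using ch[OF it t] Xe X_def by simp
    show "tit v (length u) + t \<le> 10 * Suc j * (itf (lf \<phi>) ^^ Suc j) v"
    proof -
      have tb': "t \<le> 10 * j * X" using tb Xe by simp
      have "10 * Suc j * X = 10 * X + 10 * j * X" by (simp add: algebra_simps)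
      then show ?thesis using tt tb' unfolding X_def[symmetric] by linarith
    qed
    show "length w' \<le> max (length w) ((itf (lf \<phi>) ^^ Suc j) v)"
      using wb lu Xe X_def by simp
  qed
qed

lemma enc_nil: "enc [] = (\<lambda>_. 0)" by (simp add: enc_def fun_eq_iff)

definition scr :: "nat \<Rightarrow> tape list" where
  "scr v = [ctr v, ctr 0, ctr 0, ctr 0, ctr 0, dfl]"

lemma PREP: "\<exists>p. (sT ^^ p) (init_config (CM M d) a) = (sig d 0, snd (init_config M a) @ scr (Xs d (lf \<phi>) (length a)))
   \<and> p \<le> 10 * d * Xs d (lf \<phi>) (length a) + 2 * Xs d (lf \<phi>) (length a) + 2 * length a + d + 8"
proof -
  let ?k = "tapes M"
  define n where "n = length a"
  define X where "X = Xs d (lf \<phi>) n"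
  have ic: "init_config (CM M d) a = CC 0 (enc a, 0) blank blank blank blank blank blank blank"
  proof -
    have "replicate (?k + 5) blank = blank # replicate (?k - 2) blank @ [blank, blank, blank, blank, blank, blank]"
    proof -
      have "?k + 5 = Suc ((?k - 2) + 6)" using k3 by simp
      then show ?thesis by (simp only: replicate_Suc replicate_add) (simp add: numeral_eq_Suc)
    qed
    then show ?thesis by (simp add: init_config_def CM_def cfg_def blank_def add.commute)
  qed
  have s1: "(sT ^^ 1) (CC 0 (enc a, 0) blank blank blank blank blank blank blank) =
    CC 20 (enc a, 0) blank (ctr 0) (ctr 0) (ctr 0) (ctr 0) (ctr 0) (ctr 0)"
    using L0[OF k3, where d=d and \<phi>=\<phi>] by simp
  have s2: "(sT ^^ Suc d) (CC 20 (enc a, 0) blank (ctr 0) (ctr 0) (ctr 0) (ctr 0) (ctr 0) (ctr 0)) =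
    CC 4 (enc a, 0) blank (ctr 0) (ctr 0) (ctr 0) (ctr 0) (ctr 0) (ctr d)"
    using L20[OF k3, where d=d and \<phi>=\<phi> and j=0 and m=d] by simp
  have s3: "(sT ^^ Suc n) (CC 4 (enc a, 0) blank (ctr 0) (ctr 0) (ctr 0) (ctr 0) (ctr 0) (ctr d)) =
    CC 5 (enc a, n) blank (ctr n) (ctr 0) (ctr 0) (ctr 0) (ctr n) (ctr d)"
    using L4[OF k3, where d=d and \<phi>=\<phi> and w=a and i=0 and m=n and xv=0 and rv=0] by (simp add: n_def)
  have s4: "(sT ^^ Suc n) (CC 5 (enc a, n) blank (ctr n) (ctr 0) (ctr 0) (ctr 0) (ctr n) (ctr d)) =
    CC 6 (enc a, 0) (enc [], 0) (ctr n) (ctr 0) (ctr 0) (ctr 0) (ctr 0) (ctr d)"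
    using L5[OF k3, where d=d and \<phi>=\<phi> and cz="enc a" and i=0 and m=n] by (simp add: enc_nil blank_def)
  obtain t w' where t: "(sT ^^ t) (CC 6 (enc a, 0) (enc [], 0) (ctr n) (ctr 0) (ctr 0) (ctr 0) (ctr 0) (ctr d)) =
     CC 6 (enc a, 0) (enc w', 0) (ctr X) (ctr 0) (ctr 0) (ctr 0) (ctr 0) (ctr 0)"
    and tb: "t \<le> 10 * d * X" and wb: "length w' \<le> X"
    using MLoop[of "(enc a, 0)" "[]" n d] unfolding X_def Xs_def by auto
  have s5: "(sT ^^ 1) (CC 6 (enc a, 0) (enc w', 0) (ctr X) (ctr 0) (ctr 0) (ctr 0) (ctr 0) (ctr 0)) =
     CC 18 (enc a, 0) (enc w', 0) (ctr X) (ctr 0) (ctr 0) (ctr 0) (ctr 0) (ctr 0)"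
    using L6a[OF k3, where d=d and \<phi>=\<phi>] by simp
  have s6: "(sT ^^ Suc (length w')) (CC 18 (enc a, 0) (enc w', 0) (ctr X) (ctr 0) (ctr 0) (ctr 0) (ctr 0) (ctr 0)) =
     CC 19 (enc a, 0) (\<lambda>_. 0, length w') (ctr X) (ctr 0) (ctr 0) (ctr 0) (ctr (length w')) (ctr 0)"
    using L18[OF k3, where d=d and \<phi>=\<phi> and w=w' and i=0 and m="length w'" and rv=0]
    by (simp add: zr0[OF k3] zr_full[OF k3])
  have s7: "(sT ^^ Suc (length w')) (CC 19 (enc a, 0) (\<lambda>_. 0, length w') (ctr X) (ctr 0) (ctr 0) (ctr 0) (ctr (length w')) (ctr 0)) =
     CC (21 + d) (enc a, 0) (\<lambda>_. 0, 0) (ctr X) (ctr 0) (ctr 0) (ctr 0) (ctr 0) dfl"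
    using L19[OF k3, where d=d and \<phi>=\<phi> and cz="\<lambda>_. 0" and i=0 and m="length w'"] by simp
  have fin: "CC (21 + d) (enc a, 0) (\<lambda>_. 0, 0) (ctr X) (ctr 0) (ctr 0) (ctr 0) (ctr 0) dfl =
     (sig d 0, snd (init_config M a) @ scr X)"
  proof -
    have "replicate (?k - 1) (\<lambda>_. 0::nat, 0::nat) = (\<lambda>_. 0, 0) # replicate (?k - 2) blank"
    proof -
      have "?k - 1 = Suc (?k - 2)" using k3 by simp
      then show ?thesis by (simp add: blank_def)
    qed
    then show ?thesis by (simp add: cfg_def sig_def init_config_def scr_def)
  qed
  show ?thesis
  proof (intro exI conjI)
    show "(sT ^^ (1 + Suc d + Suc n + Suc n + t + 1 + Suc (length w') + Suc (length w'))) (init_config (CM M d) a) =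
       (sig d 0, snd (init_config M a) @ scr (Xs d (lf \<phi>) (length a)))"
      unfolding ic using ch[OF ch[OF ch[OF ch[OF ch[OF ch[OF ch[OF s1 s2] s3] s4] t] s5] s6] s7] fin
      by (simp add: X_def n_def)
    show "1 + Suc d + Suc n + Suc n + t + 1 + Suc (length w') + Suc (length w') \<le>
       10 * d * Xs d (lf \<phi>) (length a) + 2 * Xs d (lf \<phi>) (length a) + 2 * length a + d + 8"
      using tb wb by (simp add: X_def n_def)
  qed
qed
end


definition validM :: "otm \<Rightarrow> config \<Rightarrow> bool" where
  "validM M cf \<longleftrightarrow> fst cf < states M \<and> length (snd cf) = tapes M \<and> (\<forall>t\<in>set (snd cf). \<forall>j. fst t j < symbols M)"

lemma enc_lt3: "enc w j < 3" by (simp add: enc_def sym_of_bool_def)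

lemma valid_init: "wf_otm M \<Longrightarrow> validM M (init_config M a)"
  unfolding validM_def wf_otm_def init_config_def
  using enc_lt3 by (auto dest: less_le_trans)

lemma map_sym: "map (\<lambda>t. fst t (snd t)) ts = map sym ts" by (simp add: sym_def[abs_def])

lemma valid_step: assumes wf: "wf_otm M" and v: "validM M (q, ts)"
  shows "validM M (step M \<phi> (q, ts))"
proof -
  have s3: "symbols M \<ge> 3" "states M \<ge> 4" using wf by (auto simp: wf_otm_def)
  consider "q = 1" | "q = 2" | "q \<noteq> 1 \<and> q \<noteq> 2" by blast
  then show ?thesis
  proof cases
    case 1 then show ?thesis using v by (simp add: step_def)
  next
    case 2
    have "\<forall>t\<in>set (ts[1 := (enc (\<phi> (dec (fst (ts ! 1)))), 0)]). \<forall>j. fst t j < symbols M"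
    proof
      fix t assume "t \<in> set (ts[1 := (enc (\<phi> (dec (fst (ts ! 1)))), 0)])"
      then have "t \<in> set ts \<or> t = (enc (\<phi> (dec (fst (ts ! 1)))), 0)" using set_update_subset_insert by fastforce
      moreover have "\<forall>w j. enc w j < symbols M" using enc_lt3 s3 by (metis less_le_trans)
      ultimately show "\<forall>j. fst t j < symbols M" using v unfolding validM_def by auto
    qed
    then show ?thesis using 2 v s3 by (simp add: step_def validM_def)
  next
    case 3
    let ?rs = "map sym ts"
    have lrs: "length ?rs = tapes M" using v by (simp add: validM_def)
    have srs: "set ?rs \<subseteq> {..<symbols M}" using v by (auto simp: validM_def sym_def)
    have q: "q < states M" using v by (simp add: validM_def)
    obtain q' acts where da: "delta M q ?rs = (q', acts)" by fastforce
    have w: "q' < states M" "length acts = tapes M" "\<forall>x\<in>set acts. fst x < symbols M"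
      using wf q lrs srs da unfolding wf_otm_def by (metis fst_conv snd_conv)+
    have "step M \<phi> (q, ts) = (q', map (\<lambda>(t, a). apt t a) (zip ts acts))"
      using 3 da by (simp add: step_gen)
    moreover have "\<forall>t\<in>set (map (\<lambda>(t, a). apt t a) (zip ts acts)). \<forall>j. fst t j < symbols M"
    proof
      fix t assume "t \<in> set (map (\<lambda>(t, a). apt t a) (zip ts acts))"
      then obtain t0 a0 where "(t0, a0) \<in> set (zip ts acts)" "t = apt t0 a0" by auto
      then have "t0 \<in> set ts" "a0 \<in> set acts" "t = apt t0 a0" by (auto dest: set_zip_leftD set_zip_rightD)
      then show "\<forall>j. fst t j < symbols M" using v w unfolding validM_def apt_def by auto
    qed
    ultimately show ?thesis using w v by (simp add: validM_def)
  qed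
qed

lemma valid_run: "wf_otm M \<Longrightarrow> validM M (run M \<phi> a t)"
proof (induction t)
  case 0 then show ?case by (simp add: run_def valid_init)
next
  case (Suc t)
  then show ?case using valid_step[OF Suc.prems, of "fst (run M \<phi> a t)" "snd (run M \<phi> a t)" \<phi>]
    by (simp add: run_def)
qed

lemma delta'_sim:
  assumes "q \<noteq> 1" "q \<noteq> 2" "\<not> ((q = 3 \<and> rs!(tapes M+5) \<noteq> 2) \<or> (q \<noteq> 3 \<and> q < 21+d))"
  shows "delta' M d q rs = (let qm = (if q = 3 then 3 else q - (21+d)) in
     if rs ! tapes M = 1 then (1, map (\<lambda>s. (s, Sm)) rs)
     else (let pr = delta M qm (take (tapes M) rs) in
        (sig d (fst pr), snd pr @ [(rs!tapes M, Lm)] @ map (\<lambda>s. (s, Sm)) (drop (tapes M+1) rs))))"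
  using assms unfolding delta'_def Let_def by auto

lemma sig2[simp]: "sig d 2 = 2" and sig3[simp]: "sig d 3 = 3" and sig1[simp]: "sig d 1 = 1" by (simp_all add: sig_def)
lemma sig_eq1: "sig d q = 1 \<longleftrightarrow> q = 1" and sig_eq2: "sig d q = 2 \<longleftrightarrow> q = 2"
  and sig_eq3: "sig d q = 3 \<longleftrightarrow> q = 3" by (auto simp: sig_def)


context fixes M :: otm and d :: nat and \<phi> :: strfun
  assumes wf: "wf_otm M"
begin

lemma k3: "tapes M \<ge> 3" using wf by (simp add: wf_otm_def)

lemma map_sym_scr: "map sym (scr v) = [cm v, 1, 1, 1, 1, 2]"
  by (simp add: scr_def[OF k3] dfl_def[OF k3])

lemma S1: assumes v: "validM M (q, ts)" and q: "q \<noteq> 1" "q \<noteq> 2"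
  shows "fst (step (CM M d) \<phi> (sig d q, ts @ scr 0)) = 1"
    and "step (CM M d) \<phi> (sig d q, ts @ scr (Suc w)) = (sig d (fst (step M \<phi> (q, ts))), snd (step M \<phi> (q, ts)) @ scr w)"
proof -
  let ?k = "tapes M"
  have lts: "length ts = ?k" using v by (simp add: validM_def)
  have qs: "q < states M" using v by (simp add: validM_def)
  have sq: "sig d q \<noteq> 1" "sig d q \<noteq> 2" using q by (simp_all add: sig_def)
  have rs: "map sym (ts @ scr u) = map sym ts @ [cm u, 1, 1, 1, 1, 2]" for u by (simp add: map_sym_scr)
  have nk: "(map sym ts @ [cm u, 1, 1, 1, 1, 2]) ! (?k + i) = [cm u, 1, 1, 1, 1, 2] ! i" for u i
    using lts by (simp add: nth_append)
  have nk0: "(map sym ts @ [cm u, 1, 1, 1, 1, 2]) ! ?k = cm u" for u using nk[of u 0] by simp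
  have nk5: "(map sym ts @ [cm u, 1, 1, 1, 1, 2]) ! (?k + 5) = 2" for u using nk[of u 5] by simp
  have notprep: "\<not> ((sig d q = 3 \<and> (map sym ts @ [cm u, 1, 1, 1, 1, 2]) ! (?k+5) \<noteq> 2) \<or> (sig d q \<noteq> 3 \<and> sig d q < 21 + d))" for u
  proof -
    have "sig d q = (if q = 3 then 3 else 21 + d + q)" using assms(2,3) by (simp add: sig_def)
    then show ?thesis using nk5[of u] by auto
  qed
  have qm: "(if sig d q = 3 then 3 else sig d q - (21 + d)) = q" using assms(2,3) by (auto simp: sig_def)
  have tk: "take ?k (map sym ts @ [cm u, 1, 1, 1, 1, 2]) = map sym ts" for u using lts by simp
  have dk: "drop (?k+1) (map sym ts @ [cm u, 1, 1, 1, 1, 2]) = [1, 1, 1, 1, 2]" for u using lts by simp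
  have del: "delta (CM M d) (sig d q) (map sym ts @ [cm u, 1, 1, 1, 1, 2]) =
     (if cm u = 1 then (1, map (\<lambda>s. (s, Sm)) (map sym ts @ [cm u, 1, 1, 1, 1, 2]))
      else (sig d (fst (delta M q (map sym ts))), snd (delta M q (map sym ts)) @ [(cm u, Lm)] @ map (\<lambda>s. (s, Sm)) [1,1,1,1,2]))" for u
    unfolding CM_def otm.select_convs using delta'_sim[OF sq notprep[of u]] unfolding Let_def qm nk0 tk dk .
  show "fst (step (CM M d) \<phi> (sig d q, ts @ scr 0)) = 1"
    unfolding step_gen[OF sq] rs del by simp
  obtain q' acts where da: "delta M q (map sym ts) = (q', acts)" by fastforce
  have srs: "set (map sym ts) \<subseteq> {..<symbols M}" using v by (auto simp: validM_def sym_def)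
  have "length (snd (delta M q (map sym ts))) = tapes M" using wf qs lts srs unfolding wf_otm_def by simp
  then have la: "length acts = ?k" using da by simp
  have sM: "step M \<phi> (q, ts) = (q', map (\<lambda>(t, a). apt t a) (zip ts acts))" using q da by (simp add: step_gen)
  have ap: "map (\<lambda>(t, a). apt t a) (zip (scr (Suc w)) ([(cm (Suc w), Lm)] @ map (\<lambda>s. (s, Sm)) [1,1,1,1,2])) = scr w"
    by (simp add: scr_def[OF k3] dfl_def[OF k3] apt_def ctr_def fun_upd_idem)
  show "step (CM M d) \<phi> (sig d q, ts @ scr (Suc w)) = (sig d (fst (step M \<phi> (q, ts))), snd (step M \<phi> (q, ts)) @ scr w)"
    unfolding step_gen[OF sq] rs del sM da using la lts ap by (simp add: zip_append)
qed

lemma S2: assumes v: "validM M (2, ts)"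
  shows "step (CM M d) \<phi> (2, ts @ scr w) = (3, snd (step M \<phi> (2, ts)) @ scr w)" "fst (step M \<phi> (2, ts)) = 3"
proof -
  have "length ts \<ge> 3" using v k3 by (simp add: validM_def)
  then show "step (CM M d) \<phi> (2, ts @ scr w) = (3, snd (step M \<phi> (2, ts)) @ scr w)"
    by (simp add: step_def list_update_append nth_append)
  show "fst (step M \<phi> (2, ts)) = 3" by (simp add: step_def)
qed

lemma S3: "step N \<psi> (1, xs) = (1, xs)" by (simp add: step_def)

lemma SH: "validM M (q, ts) \<Longrightarrow> \<exists>t \<le> 2 * v + 2. fst ((step (CM M d) \<phi> ^^ t) (sig d q, ts @ scr v)) = 1"
proof (induction v arbitrary: q ts)
  case 0
  show ?case
  proof (cases "q = 1")
    case True then show ?thesis by (intro exI[of _ 0]) (simp add: sig_def)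
  next
    case q1: False
    show ?thesis
    proof (cases "q = 2")
      case True
      let ?s = "step M \<phi> (2, ts)"
      have e3: "(3, snd ?s) = ?s" using S2(2)[OF 0[unfolded True]] by (cases ?s) simp
      have v3: "validM M (3, snd ?s)" unfolding e3 using valid_step[OF wf, of 2 ts \<phi>] 0 True by simp
      have "fst ((step (CM M d) \<phi> ^^ 2) (sig d q, ts @ scr 0)) = 1"
      proof -
        have f2: "(step (CM M d) \<phi> ^^ 2) (sig d q, ts @ scr 0) = step (CM M d) \<phi> (step (CM M d) \<phi> (2, ts @ scr 0))"
          using True by (simp add: numeral_2_eq_2 sig_def)
        show ?thesis unfolding f2 S2(1)[OF 0[unfolded True]] using S1(1)[OF v3] by simp
      qed
      then show ?thesis by (intro exI[of _ 2]) simp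
    next
      case False
      then show ?thesis using S1(1)[OF 0 q1 False] by (intro exI[of _ 1]) simp
    qed
  qed
next
  case (Suc v)
  show ?case
  proof (cases "q = 1")
    case True then show ?thesis by (intro exI[of _ 0]) (simp add: sig_def)
  next
    case q1: False
    show ?thesis
    proof (cases "q = 2")
      case True
      let ?s = "step M \<phi> (2, ts)"
      let ?s2 = "step M \<phi> (3, snd ?s)"
      have e3: "(3, snd ?s) = ?s" using S2(2)[OF Suc.prems[unfolded True]] by (cases ?s) simp
      have v3: "validM M (3, snd ?s)" unfolding e3 using valid_step[OF wf, of 2 ts \<phi>] Suc.prems True by simp
      have v4: "validM M ?s2" using valid_step[OF wf v3] .
      obtain t where t: "t \<le> 2 * v + 2" "fst ((step (CM M d) \<phi> ^^ t) (sig d (fst ?s2), snd ?s2 @ scr v)) = 1"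
        using Suc.IH[of "fst ?s2" "snd ?s2"] v4 by auto
      have f2: "(step (CM M d) \<phi> ^^ 2) (sig d q, ts @ scr (Suc v)) = step (CM M d) \<phi> (step (CM M d) \<phi> (2, ts @ scr (Suc v)))"
        using True by (simp add: numeral_2_eq_2 sig_def)
      have "(step (CM M d) \<phi> ^^ 2) (sig d q, ts @ scr (Suc v)) = (sig d (fst ?s2), snd ?s2 @ scr v)"
        unfolding f2 S2(1)[OF Suc.prems[unfolded True]] using S1(2)[OF v3, of v] by simp
      then have "fst ((step (CM M d) \<phi> ^^ (t + 2)) (sig d q, ts @ scr (Suc v))) = 1"
        using t(2) by (simp only: funpow_add comp_apply)
      moreover have "t + 2 \<le> 2 * Suc v + 2" using t(1) by simp
      ultimately show ?thesis by (intro exI[of _ "t + 2"] conjI)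
    next
      case False
      let ?s = "step M \<phi> (q, ts)"
      have v4: "validM M ?s" using valid_step[OF wf Suc.prems] .
      obtain t where t: "t \<le> 2 * v + 2" "fst ((step (CM M d) \<phi> ^^ t) (sig d (fst ?s), snd ?s @ scr v)) = 1"
        using Suc.IH[of "fst ?s" "snd ?s"] v4 by auto
      have "fst ((step (CM M d) \<phi> ^^ (t + 1)) (sig d q, ts @ scr (Suc v))) = 1"
        using t(2) S1(2)[OF Suc.prems q1 False] by (simp only: Suc_eq_plus1[symmetric] fp)
      moreover have "t + 1 \<le> 2 * Suc v + 2" using t(1) by simp
      ultimately show ?thesis by (intro exI[of _ "t + 1"] conjI)
    qed
  qed
qed

end


lemma pdelta_syms: "x\<in>set (snd (pdelta d q s0 s1 sx sa sb sc sr sd)) \<Longrightarrow> fst x \<in> {s0,s1,sx,sa,sb,sc,sr,sd,0,1,2}"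
  unfolding pdelta_def kk_def by (auto split: if_split_asm)

lemma pdelta_st: "q < 21 + d \<Longrightarrow> fst (pdelta d q s0 s1 sx sa sb sc sr sd) \<le> 21 + d"
  unfolding pdelta_def kk_def by (simp split: if_split)

lemma delta'_12: "q = 1 \<or> q = 2 \<Longrightarrow> delta' M d q rs = (q, map (\<lambda>s. (s, Sm)) rs)"
  unfolding delta'_def by presburger

lemma wf_CM: assumes wf: "wf_otm M" shows "wf_otm (CM M d)"
proof -
  let ?k = "tapes M" and ?S = "symbols M" and ?s = "states M"
  have b: "?k \<ge> 3" "?s \<ge> 4" "?S \<ge> 3" using wf by (auto simp: wf_otm_def)
  have main: "fst (delta' M d q rs) < 21 + d + ?s \<and> length (snd (delta' M d q rs)) = ?k + 6 \<and>
       (\<forall>x \<in> set (snd (delta' M d q rs)). fst x < ?S)"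
    if q: "q < 21 + d + ?s" and lr: "length rs = ?k + 6" and sr: "set rs \<subseteq> {..<?S}" for q rs
  proof -
    have rsi: "i < ?k + 6 \<Longrightarrow> rs ! i < ?S" for i using sr lr by (auto simp: subset_iff)
    consider "q = 1 \<or> q = 2" | "\<not> (q = 1 \<or> q = 2)" "(q = 3 \<and> rs!(?k+5) \<noteq> 2) \<or> (q \<noteq> 3 \<and> q < 21+d)"
      | "\<not> (q = 1 \<or> q = 2)" "\<not> ((q = 3 \<and> rs!(?k+5) \<noteq> 2) \<or> (q \<noteq> 3 \<and> q < 21+d))" by blast
    then show ?thesis
    proof cases
      case 1
      have "delta' M d q rs = (q, map (\<lambda>s. (s, Sm)) rs)"
        using 1 by (rule delta'_12)
      then show ?thesis using sr lr q by (auto simp: subset_iff)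
    next
      case 2
      define pr where "pr = pdelta d (if q = 3 then 8 else q) (rs!0) (rs!1) (rs!?k) (rs!(?k+1))
         (rs!(?k+2)) (rs!(?k+3)) (rs!(?k+4)) (rs!(?k+5))"
      have dl: "delta' M d q rs = (fst pr, [snd pr ! 0, snd pr ! 1] @ map (\<lambda>i. (rs!i, Sm)) [2..<?k] @ drop 2 (snd pr))"
      proof -
        have n12: "q \<noteq> 1" "q \<noteq> 2" using 2(1) by auto
        show ?thesis unfolding pr_def using delta'_prep[OF n12 2(2)] unfolding Let_def .
      qed
      have len: "length (snd pr) = 8" unfolding pr_def by (rule pdelta_len)
      have st: "fst pr \<le> 21 + d" unfolding pr_def by (rule pdelta_st) (use 2 in auto)
      have sy: "\<forall>x\<in>set (snd pr). fst x < ?S"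
      proof
        fix x assume xin: "x \<in> set (snd pr)"
        have "fst x \<in> {rs!0, rs!1, rs!?k, rs!(?k+1), rs!(?k+2), rs!(?k+3), rs!(?k+4), rs!(?k+5), 0, 1, 2}"
          using pdelta_syms[OF xin[unfolded pr_def]] .
        then show "fst x < ?S" using rsi[of 0] rsi[of 1] rsi[of ?k] rsi[of "?k+1"] rsi[of "?k+2"] rsi[of "?k+3"]
          rsi[of "?k+4"] rsi[of "?k+5"] b by auto
      qed
      have s01: "snd pr ! 0 \<in> set (snd pr)" "snd pr ! 1 \<in> set (snd pr)" using len by auto
      have "\<forall>x\<in>set (drop 2 (snd pr)). fst x < ?S" using sy by (meson in_set_dropD)
      then show ?thesis using dl len st sy s01 b rsi by auto
    next
      case 3
      define qm where "qm = (if q = 3 then 3 else q - (21 + d))"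
      have qm: "qm < ?s" using 3 q b unfolding qm_def by auto
      have dl: "delta' M d q rs = (if rs ! ?k = 1 then (1, map (\<lambda>s. (s, Sm)) rs)
         else (sig d (fst (delta M qm (take ?k rs))), snd (delta M qm (take ?k rs)) @ [(rs!?k, Lm)] @ map (\<lambda>s. (s, Sm)) (drop (?k+1) rs)))"
        using delta'_sim[where q=q and M=M and rs=rs and d=d] 3 unfolding qm_def Let_def by simp
      have tk: "length (take ?k rs) = ?k" "set (take ?k rs) \<subseteq> {..<?S}" using lr sr by (auto dest: in_set_takeD)
      have w: "fst (delta M qm (take ?k rs)) < ?s" "length (snd (delta M qm (take ?k rs))) = ?k"
        "\<forall>x\<in>set (snd (delta M qm (take ?k rs))). fst x < ?S"
        using wf qm tk unfolding wf_otm_def by blast+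
      have sg: "sig d (fst (delta M qm (take ?k rs))) < 21 + d + ?s" using w(1) b by (auto simp: sig_def)
      have rk: "rs ! ?k < ?S" using rsi by simp
      have dr: "\<forall>x\<in>set (drop (?k+1) rs). x < ?S" using sr by (auto dest: in_set_dropD)
      show ?thesis using dl w sg rk dr lr sr q by (auto simp: subset_iff)
    qed
  qed
  show ?thesis using b main unfolding wf_otm_def CM_def by (simp; blast)
qed


lemma Xs_0[simp]: "Xs 0 l n = n" by (simp add: Xs_def)
lemma Xs_Suc: "Xs (Suc d) l n = itf l (Xs d l n)" by (simp add: Xs_def)

lemma Xs_mono_d: "d \<le> e \<Longrightarrow> Xs d l n \<le> Xs e l n"
proof (induction e)
  case 0 then show ?case by simp
next
  case (Suc e)
  show ?case
  proof (cases "d = Suc e")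
    case False
    then have "Xs d l n \<le> Xs e l n" using Suc by simp
    also have "\<dots> \<le> Xs (Suc e) l n" unfolding Xs_Suc by (rule itf_ge)
    finally show ?thesis .
  qed simp
qed

lemma itf_mono: "Y \<le> Y' \<Longrightarrow> (\<forall>x. l x \<le> l' x) \<Longrightarrow> mono l' \<Longrightarrow> itf l Y \<le> itf l' Y'"
proof -
  assume a: "Y \<le> Y'" "\<forall>x. l x \<le> l' x" "mono l'"
  have "l Y \<le> l' Y'" using a by (meson le_trans monoD)
  then have "Y + l Y + 2 \<le> Y' + l' Y' + 2" by (intro add_mono[OF add_mono[OF a(1)]]) simp_all
  then show ?thesis unfolding itf_def by (intro mult_le_mono)
qed

lemma Xs_mono_l: "(\<forall>x. l x \<le> l' x) \<Longrightarrow> mono l' \<Longrightarrow> Xs d l n \<le> Xs d l' n"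
  by (induction d) (auto simp: Xs_Suc intro: itf_mono)

lemma itf_sq: "Y * Y \<le> itf l Y" "2 * Y \<le> itf l Y"
proof -
  define Z where "Z = Y + l Y + 2"
  have "Y \<le> Z" "Z \<ge> 2" by (simp_all add: Z_def)
  then have "Y * Y \<le> Z * Z" "2 * Y \<le> Z * Z" by (simp_all add: mult_le_mono mult_le_mono1)
  then show "Y * Y \<le> itf l Y" "2 * Y \<le> itf l Y" by (simp_all add: itf_def Z_def)
qed

lemma Xs_pow: "(n + 2) ^ (2 ^ Suc d) \<le> Xs (Suc d) l n"
proof (induction d)
  case 0
  have "(n + 2) * (n + 2) \<le> itf l n" unfolding itf_def by (intro mult_le_mono) simp_all
  then show ?case by (simp add: Xs_Suc power2_eq_square)
next
  case (Suc d)
  have "(n + 2) ^ (2 ^ Suc (Suc d)) = (n + 2) ^ (2 ^ Suc d) * (n + 2) ^ (2 ^ Suc d)"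
  proof -
    have "(2::nat) ^ Suc (Suc d) = 2 ^ Suc d + 2 ^ Suc d" by simp
    then show ?thesis by (simp only: power_add)
  qed
  also have "\<dots> \<le> Xs (Suc d) l n * Xs (Suc d) l n" using Suc by (intro mult_le_mono)
  also have "\<dots> \<le> Xs (Suc (Suc d)) l n" unfolding Xs_Suc[of "Suc d"] by (rule itf_sq)
  finally show ?case .
qed

lemma pow_ge: "n + a + 2 \<le> (n + 2) ^ (a + 1)"
proof (induction a)
  case (Suc a)
  have "n + Suc a + 2 \<le> 2 * (n + a + 2)" by simp
  also have "\<dots> \<le> (n + 2) * (n + a + 2)" by (intro mult_le_mono1) simp
  also have "\<dots> \<le> (n + 2) * (n + 2) ^ (a + 1)" using Suc by (intro mult_le_mono2)
  finally show ?case by simp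
qed simp

lemma poly_bound: "\<exists>N. \<forall>n. poly p (n::nat) \<le> (n + 2) ^ N"
proof (induction p rule: pCons_induct)
  case 0 then show ?case by simp
next
  case (pCons a p)
  then obtain N where N: "\<And>n. poly p n \<le> (n + 2) ^ N" by blast
  have "poly (pCons a p) n \<le> (n + 2) ^ (N + (a + 1))" for n
  proof -
    have B: "1 \<le> (n + 2) ^ N" by simp
    have "poly (pCons a p) n = a + n * poly p n" by simp
    also have "\<dots> \<le> a + n * (n + 2) ^ N" using N[of n] by simp
    also have "\<dots> \<le> (n + a + 1) * (n + 2) ^ N"
    proof -
      have "a * 1 \<le> a * (n + 2) ^ N" using B by (rule mult_le_mono2)
      moreover have "(n + a + 1) * (n + 2) ^ N = n * (n + 2) ^ N + a * (n + 2) ^ N + (n + 2) ^ N"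
        by (simp add: algebra_simps)
      ultimately show ?thesis by linarith
    qed
    also have "\<dots> \<le> (n + 2) ^ (a + 1) * (n + 2) ^ N" using pow_ge[of n a] by (intro mult_le_mono1) simp
    also have "\<dots> = (n + 2) ^ (N + (a + 1))" by (metis power_add mult.commute)
    finally show ?thesis .
  qed
  then show ?case by blast
qed

lemma NF: "sop P \<Longrightarrow> \<exists>d. \<forall>l n. mono l \<longrightarrow> P l n \<le> Xs d l n"
proof (induction rule: sop.induct)
  case (sop_poly p)
  obtain N where N: "\<And>n. poly p n \<le> (n + 2) ^ N" using poly_bound[of p] by blast
  have "poly p n \<le> Xs (Suc N) l n" for l n
  proof -
    have "N < 2 ^ N" by (rule less_exp)
    moreover have "(2::nat) ^ N \<le> 2 ^ Suc N" by simp
    ultimately have "N \<le> 2 ^ Suc N" by linarith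
    then have "(n + 2) ^ N \<le> (n + 2) ^ (2 ^ Suc N)" by (intro power_increasing) simp_all
    then show ?thesis using N[of n] Xs_pow[of n N l] by linarith
  qed
  then show ?case by blast
next
  case (sop_add P Q)
  then obtain d1 d2 where d1: "\<And>l n. mono l \<Longrightarrow> P l n \<le> Xs d1 l n" and d2: "\<And>l n. mono l \<Longrightarrow> Q l n \<le> Xs d2 l n" by blast
  have "P l n + Q l n \<le> Xs (Suc (max d1 d2)) l n" if "mono l" for l n
  proof -
    have "P l n \<le> Xs (max d1 d2) l n" using d1[OF that, of n] Xs_mono_d[of d1 "max d1 d2" l n] by simp
    moreover have "Q l n \<le> Xs (max d1 d2) l n" using d2[OF that, of n] Xs_mono_d[of d2 "max d1 d2" l n] by simp
    ultimately show ?thesis using itf_sq(2)[where Y="Xs (max d1 d2) l n" and l=l] by (simp add: Xs_Suc)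
  qed
  then show ?case by blast
next
  case (sop_mult P Q)
  then obtain d1 d2 where d1: "\<And>l n. mono l \<Longrightarrow> P l n \<le> Xs d1 l n" and d2: "\<And>l n. mono l \<Longrightarrow> Q l n \<le> Xs d2 l n" by blast
  have "P l n * Q l n \<le> Xs (Suc (max d1 d2)) l n" if "mono l" for l n
  proof -
    have "P l n \<le> Xs (max d1 d2) l n" using d1[OF that, of n] Xs_mono_d[of d1 "max d1 d2" l n] by simp
    moreover have "Q l n \<le> Xs (max d1 d2) l n" using d2[OF that, of n] Xs_mono_d[of d2 "max d1 d2" l n] by simp
    ultimately have "P l n * Q l n \<le> Xs (max d1 d2) l n * Xs (max d1 d2) l n" by (rule mult_le_mono)
    then show ?thesis using itf_sq(1)[where Y="Xs (max d1 d2) l n" and l=l] by (simp add: Xs_Suc)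
  qed
  then show ?case by blast
next
  case (sop_app P)
  then obtain d1 where d1: "\<And>l n. mono l \<Longrightarrow> P l n \<le> Xs d1 l n" by blast
  have "l (P l n) \<le> Xs (Suc d1) l n" if "mono l" for l n
  proof -
    have "l (P l n) \<le> l (Xs d1 l n)" using d1[OF that, of n] that by (simp add: monoD)
    then show ?thesis using itf_ge(2)[where v="Xs d1 l n" and l=l] by (simp add: Xs_Suc)
  qed
  then show ?case by blast
qed

lemma sop_const: "sop (\<lambda>l n. c)"
proof -
  have "sop (\<lambda>l n. poly [:c:] n)" by (rule sop_poly)
  then show ?thesis by simp
qed

lemma sop_id: "sop (\<lambda>l n. n)"
proof -
  have "sop (\<lambda>l n. poly [:0, 1:] n)" by (rule sop_poly)
  then show ?thesis by simp
qed

lemma sop_Xs: "sop (\<lambda>l n. Xs d l n)"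
proof (induction d)
  case 0 then show ?case using sop_id by simp
next
  case (Suc d)
  have A: "sop (\<lambda>l n. Xs d l n + l (Xs d l n) + 2)"
    using sop_add[OF sop_add[OF Suc sop_app[OF Suc]] sop_const[of 2]] .
  have "sop (\<lambda>l n. (Xs d l n + l (Xs d l n) + 2) * (Xs d l n + l (Xs d l n) + 2))"
    using sop_mult[OF A A] .
  then show ?case by (simp add: Xs_Suc itf_def)
qed

lemma sop_bound: "sop (\<lambda>l n. (10 * d + 4) * Xs d l n + 2 * n + (d + 10))"
  using sop_add[OF sop_add[OF sop_mult[OF sop_const[of "10 * d + 4"] sop_Xs[of d]] sop_mult[OF sop_const[of 2] sop_id]] sop_const[of "d + 10"]] .

lemma fin_words: "finite {a :: word. length a \<le> m}"
  using finite_lists_length_le[of "UNIV :: bool set" m] by simp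

lemma lf_le_size: "lf \<phi> m \<le> size_fn \<phi> m"
  unfolding lf_def size_fn_def by (rule Max_ge) (use fin_words in auto)

lemma size_mono: "mono (size_fn \<phi>)"
proof
  fix m m' :: nat assume "m \<le> m'"
  then have sub: "{a :: word. length a \<le> m} \<subseteq> {a. length a \<le> m'}" by auto
  have ne: "{a :: word. length a \<le> m} \<noteq> {}" by (metis empty_iff list.size(3) mem_Collect_eq zero_le)
  show "size_fn \<phi> m \<le> size_fn \<phi> m'" unfolding size_fn_def
    by (rule Max_mono) (use sub ne fin_words in auto)
qed

lemma size_lf: "\<phi> \<in> length_monotone \<Longrightarrow> size_fn \<phi> = lf \<phi>"
proof
  fix m assume mono: "\<phi> \<in> length_monotone"
  show "size_fn \<phi> m = lf \<phi> m"
  proof (rule antisym)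
    show "size_fn \<phi> m \<le> lf \<phi> m" unfolding size_fn_def lf_def
    proof (rule Max.boundedI)
      show "finite ((\<lambda>a. length (\<phi> a)) ` {a. length a \<le> m})" using fin_words by simp
      have "[] \<in> {a :: word. length a \<le> m}" by simp
      then show "(\<lambda>a. length (\<phi> a)) ` {a. length a \<le> m} \<noteq> {}" by blast
      show "\<And>x. x \<in> (\<lambda>a. length (\<phi> a)) ` {a. length a \<le> m} \<Longrightarrow> x \<le> length (\<phi> (replicate m False))"
        using mono unfolding length_monotone_def by auto
    qed
    show "lf \<phi> m \<le> size_fn \<phi> m" by (rule lf_le_size)
  qed
qed


lemma step_halt: "step N \<psi> (1, xs) = (1, xs)" by (simp add: step_def)

lemma absorb: "fst (run N \<phi> a n) = 1 \<Longrightarrow> run N \<phi> a (m + n) = run N \<phi> a n"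
proof (induction m)
  case (Suc m)
  have "run N \<phi> a (Suc m + n) = step N \<phi> (run N \<phi> a (m + n))" by (simp add: run_def)
  also have "\<dots> = step N \<phi> (run N \<phi> a n)" using Suc by simp
  also have "\<dots> = run N \<phi> a n" using Suc.prems step_halt[of N \<phi> "snd (run N \<phi> a n)"]
    by (metis prod.collapse)
  finally show ?case .
qed simp

lemma halt_le: "fst (run N \<phi> a t) = 1 \<Longrightarrow> halts N \<phi> a \<and> otm_time N \<phi> a \<le> t"
  unfolding halts_def otm_time_def by (auto intro: Least_le)

lemma run_add: "run N \<phi> a (t + p) = (step N \<phi> ^^ t) ((step N \<phi> ^^ p) (init_config N a))"
  by (simp add: run_def funpow_add)

lemma TB: assumes wf: "wf_otm M"
  shows "halts (CM M d) \<phi> a \<and> otm_time (CM M d) \<phi> a \<le>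
     (10 * d + 4) * Xs d (size_fn \<phi>) (length a) + 2 * length a + (d + 10)"
proof -
  have k3: "tapes M \<ge> 3" using wf by (simp add: wf_otm_def)
  define X where "X = Xs d (lf \<phi>) (length a)"
  obtain p where p: "(step (CM M d) \<phi> ^^ p) (init_config (CM M d) a) = (sig d 0, snd (init_config M a) @ scr X)"
    and pb: "p \<le> 10 * d * X + 2 * X + 2 * length a + d + 8"
    using PREP[where d=d and \<phi>=\<phi> and a=a, OF k3] unfolding X_def by blast
  have v0: "validM M (0, snd (init_config M a))" using valid_init[OF wf, of a] by (simp add: init_config_def)
  obtain t where t: "t \<le> 2 * X + 2" and h: "fst ((step (CM M d) \<phi> ^^ t) (sig d 0, snd (init_config M a) @ scr X)) = 1"
    using SH[where d=d and \<phi>=\<phi> and v=X, OF wf v0] by blast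
  have "fst (run (CM M d) \<phi> a (t + p)) = 1" unfolding run_add p using h .
  then have hl: "halts (CM M d) \<phi> a \<and> otm_time (CM M d) \<phi> a \<le> t + p" by (rule halt_le)
  have XS: "X \<le> Xs d (size_fn \<phi>) (length a)" unfolding X_def
    by (rule Xs_mono_l) (simp_all add: lf_le_size size_mono)
  have "t + p \<le> (10 * d + 4) * X + 2 * length a + (d + 10)"
    using t pb by (simp add: algebra_simps)
  also have "\<dots> \<le> (10 * d + 4) * Xs d (size_fn \<phi>) (length a) + 2 * length a + (d + 10)"
    using XS by simp
  finally show ?thesis using hl by linarith
qed

lemma SC: assumes wf: "wf_otm M" and nh: "\<forall>t' < tM. fst (run M \<phi> a t') \<noteq> 1" and tX: "tM \<le> X"
  shows "t \<le> tM \<Longrightarrow> \<exists>u \<le> t. (step (CM M d) \<phi> ^^ t) (sig d 0, snd (init_config M a) @ scr X) =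
     (sig d (fst (run M \<phi> a t)), snd (run M \<phi> a t) @ scr (X - u))"
proof (induction t)
  case 0 then show ?case by (simp add: run_def init_config_def)
next
  case (Suc t)
  then obtain u where u: "u \<le> t" and e: "(step (CM M d) \<phi> ^^ t) (sig d 0, snd (init_config M a) @ scr X) =
     (sig d (fst (run M \<phi> a t)), snd (run M \<phi> a t) @ scr (X - u))" by auto
  define q where "q = fst (run M \<phi> a t)"
  define ts where "ts = snd (run M \<phi> a t)"
  have rq: "run M \<phi> a t = (q, ts)" by (simp add: q_def ts_def)
  have v: "validM M (q, ts)" using valid_run[OF wf, of \<phi> a t] rq by simp
  have q1: "q \<noteq> 1" using nh Suc.prems by (simp add: q_def)
  have rs: "run M \<phi> a (Suc t) = step M \<phi> (q, ts)" using rq by (simp add: run_def)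
  have e': "(step (CM M d) \<phi> ^^ Suc t) (sig d 0, snd (init_config M a) @ scr X) = step (CM M d) \<phi> (sig d q, ts @ scr (X - u))"
    using e by (simp add: q_def ts_def)
  show ?case
  proof (cases "q = 2")
    case True
    have "step (CM M d) \<phi> (sig d q, ts @ scr (X - u)) = (sig d (fst (run M \<phi> a (Suc t))), snd (run M \<phi> a (Suc t)) @ scr (X - u))"
      using S2(1)[where d=d and \<phi>=\<phi> and w="X - u", OF wf v[unfolded True]] S2(2)[OF wf v[unfolded True]] True rs by simp
    then show ?thesis using e' u by (intro exI[of _ u]) simp
  next
    case False
    have "X - u = Suc (X - Suc u)" using u Suc.prems tX by simp
    then have "step (CM M d) \<phi> (sig d q, ts @ scr (X - u)) = (sig d (fst (run M \<phi> a (Suc t))), snd (run M \<phi> a (Suc t)) @ scr (X - Suc u))"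
      using S1(2)[where d=d and \<phi>=\<phi> and w="X - Suc u", OF wf v q1 False] rs by simp
    then show ?thesis using e' u by (intro exI[of _ "Suc u"]) simp
  qed
qed

lemma CORR: assumes wf: "wf_otm M" and hM: "halts M \<phi> a"
  and tX: "otm_time M \<phi> a \<le> Xs d (lf \<phi>) (length a)"
  shows "otm_output (CM M d) \<phi> a = otm_output M \<phi> a"
proof -
  have k3: "tapes M \<ge> 3" using wf by (simp add: wf_otm_def)
  define X where "X = Xs d (lf \<phi>) (length a)"
  define tM where "tM = otm_time M \<phi> a"
  have hM1: "fst (run M \<phi> a tM) = 1" using hM unfolding halts_def tM_def otm_time_def by (rule LeastI_ex)
  have nh: "\<forall>t' < tM. fst (run M \<phi> a t') \<noteq> 1" unfolding tM_def otm_time_def using not_less_Least by blast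
  obtain p where p: "(step (CM M d) \<phi> ^^ p) (init_config (CM M d) a) = (sig d 0, snd (init_config M a) @ scr X)"
    using PREP[where d=d and \<phi>=\<phi> and a=a, OF k3] unfolding X_def by blast
  have sc: "t \<le> tM \<Longrightarrow> \<exists>u \<le> t. run (CM M d) \<phi> a (t + p) = (sig d (fst (run M \<phi> a t)), snd (run M \<phi> a t) @ scr (X - u))" for t
    unfolding run_add p using SC[where d=d and X=X and t=t, OF wf nh] tX by (simp add: X_def tM_def)
  obtain u where u: "run (CM M d) \<phi> a (tM + p) = (1, snd (run M \<phi> a tM) @ scr (X - u))"
    using sc[of tM] hM1 by (auto simp: sig_def)
  have time: "otm_time (CM M d) \<phi> a = tM + p"
    unfolding otm_time_def
  proof (rule Least_equality)
    show "fst (run (CM M d) \<phi> a (tM + p)) = 1" using u by simp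
    fix n assume n1: "fst (run (CM M d) \<phi> a n) = 1"
    show "tM + p \<le> n"
    proof (rule ccontr)
      assume "\<not> tM + p \<le> n"
      then have lt: "n < tM + p" by simp
      show False
      proof (cases "n < p")
        case True
        have "run (CM M d) \<phi> a ((p - n) + n) = run (CM M d) \<phi> a n" using absorb[OF n1] .
        then have "fst (run (CM M d) \<phi> a p) = 1" using True n1 by simp
        moreover have "run (CM M d) \<phi> a p = (sig d 0, snd (init_config M a) @ scr X)" using p by (simp add: run_def)
        ultimately show False by (simp add: sig_def)
      next
        case False
        then obtain t' where t': "n = t' + p" by (metis add.commute le_add_diff_inverse not_less)
        then have "t' < tM" using lt by simp
        then obtain u' where "run (CM M d) \<phi> a n = (sig d (fst (run M \<phi> a t')), snd (run M \<phi> a t') @ scr (X - u'))"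
          using sc[of t'] t' by auto
        then have "sig d (fst (run M \<phi> a t')) = 1" using n1 by simp
        then have "fst (run M \<phi> a t') = 1" by (simp add: sig_def split: if_splits)
        then show False using nh \<open>t' < tM\<close> by blast
      qed
    qed
  qed
  have len: "length (snd (run M \<phi> a tM)) = tapes M" using valid_run[OF wf, of \<phi> a tM] by (simp add: validM_def)
  show ?thesis unfolding otm_output_def time u using len k3
    by (simp add: nth_append tM_def)
qed

theorem mainTheorem9:
  fixes F :: "strfun \<Rightarrow> strfun"
  shows "restricted_polytime length_monotone F \<longleftrightarrow>
    (\<exists>G. (\<forall>\<phi>\<in>length_monotone. G \<phi> = F \<phi>) \<and> polytime G)"
proof
  assume "restricted_polytime length_monotone F"
  then obtain M P where wf: "wf_otm M" and sP: "sop P" and co: "computes_on length_monotone M F"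
    and tb: "\<forall>\<phi>\<in>length_monotone. \<forall>a. otm_time M \<phi> a \<le> P (size_fn \<phi>) (length a)"
    unfolding restricted_polytime_def by blast
  obtain d where d: "\<And>l n. mono l \<Longrightarrow> P l n \<le> Xs d l n" using NF[OF sP] by blast
  define G where "G = (\<lambda>\<phi> a. otm_output (CM M d) \<phi> a)"
  have eq: "G \<phi> = F \<phi>" if m: "\<phi> \<in> length_monotone" for \<phi>
  proof
    fix a
    have hM: "halts M \<phi> a" and oM: "otm_output M \<phi> a = F \<phi> a" using co m unfolding computes_on_def by auto
    have "otm_time M \<phi> a \<le> P (size_fn \<phi>) (length a)" using tb m by blast
    also have "\<dots> \<le> Xs d (size_fn \<phi>) (length a)" using d size_mono by blast
    also have "\<dots> = Xs d (lf \<phi>) (length a)" using size_lf[OF m] by simp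
    finally have "otm_time M \<phi> a \<le> Xs d (lf \<phi>) (length a)" .
    then show "G \<phi> a = F \<phi> a" unfolding G_def using CORR[OF wf hM] oM by simp
  qed
  have "polytime G"
    unfolding polytime_def restricted_polytime_def
  proof (intro exI conjI)
    show "wf_otm (CM M d)" by (rule wf_CM[OF wf])
    show "sop (\<lambda>l n. (10 * d + 4) * Xs d l n + 2 * n + (d + 10))" by (rule sop_bound)
    show "computes_on UNIV (CM M d) G" unfolding computes_on_def G_def using TB[OF wf] by blast
    show "\<forall>\<phi>\<in>UNIV. \<forall>a. otm_time (CM M d) \<phi> a \<le> (10 * d + 4) * Xs d (size_fn \<phi>) (length a) + 2 * length a + (d + 10)"
      using TB[OF wf] by blast
  qed
  then show "\<exists>G. (\<forall>\<phi>\<in>length_monotone. G \<phi> = F \<phi>) \<and> polytime G" using eq by blast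
next
  assume "\<exists>G. (\<forall>\<phi>\<in>length_monotone. G \<phi> = F \<phi>) \<and> polytime G"
  then obtain G where eq: "\<forall>\<phi>\<in>length_monotone. G \<phi> = F \<phi>" and "polytime G" by blast
  then obtain M P where wf: "wf_otm M" and sP: "sop P" and co: "computes_on UNIV M G"
    and tb: "\<forall>\<phi>\<in>UNIV. \<forall>a. otm_time M \<phi> a \<le> P (size_fn \<phi>) (length a)"
    unfolding polytime_def restricted_polytime_def by blast
  have "computes_on length_monotone M F" using co eq unfolding computes_on_def by auto
  then show "restricted_polytime length_monotone F"
    unfolding restricted_polytime_def using wf sP tb by blast
qed


end
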